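(* Assume $n = 3$ bidders, $k = 2$ items, values i.i.d. on $[0,\bar v]$ with CDF $F$ and density $f>0$, and let $A$ be the efficient allocation rule. Let $\pi$ be any (non-negative) payment rule implementing $A$ that is ex-post individually rational. Then there exist measurable functions $P_1, P_2$ on $\mathcal T = \{(y_1,y_2) : \bar v \ge y_1 \ge y_2 \ge 0\}$ such that the payment rule $P$ in which the highest-value bidder pays $P_1(v_{(1)},v_{(2)})$, the second-highest-value bidder pays $P_2(v_{(1)},v_{(2)})$ and the lowest-value bidder pays $0$ (payments independent of bidder identities and of $v_{(3)}$) is non-negative, ex-post individually rational, satisfies $\mathbb E[P_i(\bm v)\mid v_i] = z(v_i)$ for all $i, v_i$, and satisfies $\mathbb E[g(\sum_i P_i(\bm v))] \le \mathbb E[g(\sum_i \pi_i(\bm v))]$ for every convex $g : \mathbb R \to \mathbb R$ (for which the expectations exist); in particular the revenue variance of $P$ is at most that of $\pi$.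
   Context: Here $v_{(1)} \ge v_{(2)} \ge v_{(3)}$ are the order statistics of $\bm v$. The efficient allocation rule gives one item to each of the $k$ bidders with the highest values (ties broken by any fixed rule). For an allocation rule $A$, $x(v) = \mathbb E[A_i(\bm v)\mid v_i = v]$ and $z(v) = v x(v) - \int_0^v x(u)\,du$. A payment rule is a measurable map $P : [0,\bar v]^n \to [0,\infty)^n$; it implements $A$ if $(A,P)$ is Bayesian incentive compatible and $\mathbb E[P_i(\bm v)\mid v_i] = z(v_i)$ for all $i, v_i$. It is ex-post individually rational if $v_iA_i(\bm v) - P_i(\bm v) \ge 0$ for all $i$ and $\bm v$. *)

theory Defs
  imports "HOL-Probability.Probability"
begin

text \<open>Setting: n = 3 bidders indexed by 0,1,2; k = 2 items.
  A value profile is a function nat => real (only the coordinates 0,1,2 matter).\<close>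

definition bidders :: "nat set" where "bidders = {..<3}"

definition val_dist :: "(real \<Rightarrow> real) \<Rightarrow> real measure" where
  "val_dist f = density lborel (\<lambda>x. ennreal (f x))"

definition prof_measure :: "(real \<Rightarrow> real) \<Rightarrow> (nat \<Rightarrow> real) measure" where
  "prof_measure f = PiM bidders (\<lambda>_. val_dist f)"

definition box :: "real \<Rightarrow> (nat \<Rightarrow> real) set" where
  "box vbar = {v. \<forall>i\<in>bidders. v i \<in> {0..vbar}}"

text \<open>Rank of bidder i in profile v (0 = highest), ties broken by the fixed rule
  "smaller index ranks higher".\<close>
definition rank :: "(nat \<Rightarrow> real) \<Rightarrow> nat \<Rightarrow> nat" where
  "rank v i = card {j\<in>bidders. v j > v i \<or> (v j = v i \<and> j < i)}"

text \<open>Order statistics: ostat v 0 = v_(1), ostat v 1 = v_(2), ostat v 2 = v_(3).\<close>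
definition ostat :: "(nat \<Rightarrow> real) \<Rightarrow> nat \<Rightarrow> real" where
  "ostat v k = rev (sort (map v [0..<3])) ! k"

definition eff_alloc :: "nat \<Rightarrow> (nat \<Rightarrow> real) \<Rightarrow> real" where
  "eff_alloc i v = (if rank v i < 2 then 1 else 0)"

text \<open>Interim (conditional on v_i = w) expectation of a function Q i of the profile,
  for independent values: integrate over the other bidders' values.\<close>
definition interim :: "(real \<Rightarrow> real) \<Rightarrow> (nat \<Rightarrow> (nat \<Rightarrow> real) \<Rightarrow> real) \<Rightarrow> nat \<Rightarrow> real \<Rightarrow> real" where
  "interim f Q i w = (\<integral>v. Q i (v(i := w)) \<partial>prof_measure f)"

definition xfun :: "(real \<Rightarrow> real) \<Rightarrow> (nat \<Rightarrow> (nat \<Rightarrow> real) \<Rightarrow> real) \<Rightarrow> nat \<Rightarrow> real \<Rightarrow> real" where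
  "xfun f A i w = interim f A i w"

definition zfun :: "(real \<Rightarrow> real) \<Rightarrow> (nat \<Rightarrow> (nat \<Rightarrow> real) \<Rightarrow> real) \<Rightarrow> nat \<Rightarrow> real \<Rightarrow> real" where
  "zfun f A i w = w * xfun f A i w - (LBINT u:{0..w}. xfun f A i u)"

definition payment_rule :: "(real \<Rightarrow> real) \<Rightarrow> real \<Rightarrow> (nat \<Rightarrow> (nat \<Rightarrow> real) \<Rightarrow> real) \<Rightarrow> bool" where
  "payment_rule f vbar P \<longleftrightarrow>
     (\<forall>i\<in>bidders. P i \<in> borel_measurable (prof_measure f)) \<and>
     (\<forall>i\<in>bidders. \<forall>v\<in>box vbar. P i v \<ge> 0)"

definition BIC :: "(real \<Rightarrow> real) \<Rightarrow> real \<Rightarrow> (nat \<Rightarrow> (nat \<Rightarrow> real) \<Rightarrow> real)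
    \<Rightarrow> (nat \<Rightarrow> (nat \<Rightarrow> real) \<Rightarrow> real) \<Rightarrow> bool" where
  "BIC f vbar A P \<longleftrightarrow>
     (\<forall>i\<in>bidders. \<forall>w\<in>{0..vbar}. \<forall>w'\<in>{0..vbar}.
        w * interim f A i w - interim f P i w \<ge> w * interim f A i w' - interim f P i w')"

definition implements :: "(real \<Rightarrow> real) \<Rightarrow> real \<Rightarrow> (nat \<Rightarrow> (nat \<Rightarrow> real) \<Rightarrow> real)
    \<Rightarrow> (nat \<Rightarrow> (nat \<Rightarrow> real) \<Rightarrow> real) \<Rightarrow> bool" where
  "implements f vbar A P \<longleftrightarrow> BIC f vbar A P \<and>
     (\<forall>i\<in>bidders. \<forall>w\<in>{0..vbar}. interim f P i w = zfun f A i w)"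

definition ex_post_IR :: "real \<Rightarrow> (nat \<Rightarrow> (nat \<Rightarrow> real) \<Rightarrow> real)
    \<Rightarrow> (nat \<Rightarrow> (nat \<Rightarrow> real) \<Rightarrow> real) \<Rightarrow> bool" where
  "ex_post_IR vbar A P \<longleftrightarrow> (\<forall>i\<in>bidders. \<forall>v\<in>box vbar. v i * A i v - P i v \<ge> 0)"

definition rank_pay :: "(real \<Rightarrow> real \<Rightarrow> real) \<Rightarrow> (real \<Rightarrow> real \<Rightarrow> real)
    \<Rightarrow> nat \<Rightarrow> (nat \<Rightarrow> real) \<Rightarrow> real" where
  "rank_pay P1 P2 i v =
     (if rank v i = 0 then P1 (ostat v 0) (ostat v 1)
      else if rank v i = 1 then P2 (ostat v 0) (ostat v 1) else 0)"

definition tri :: "real \<Rightarrow> (real \<times> real) set" where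
  "tri vbar = {(y1, y2). vbar \<ge> y1 \<and> y1 \<ge> y2 \<and> y2 \<ge> 0}"

end

theory Submission
  imports Defs
begin


definition pm :: "nat \<Rightarrow> nat \<Rightarrow> nat" where
  "pm k i = [[0,1,2],[0,2,1],[1,0,2],[1,2,0],[2,0,1],[2,1,0::nat]] ! k ! i"
definition iv :: "nat \<Rightarrow> nat \<Rightarrow> nat" where
  "iv k i = [[0,1,2],[0,2,1],[1,0,2],[2,0,1],[1,2,0],[2,1,0::nat]] ! k ! i"

lemma k6: "k < (6::nat) \<Longrightarrow> k = 0 \<or> k = 1 \<or> k = 2 \<or> k = 3 \<or> k = 4 \<or> k = 5" by arith
lemma i3: "i < (3::nat) \<Longrightarrow> i = 0 \<or> i = 1 \<or> i = 2" by arith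

lemma pm_lt: "k < 6 \<Longrightarrow> i < 3 \<Longrightarrow> pm k i < 3"
  by (drule k6, drule i3) (auto simp: pm_def)
lemma iv_lt: "k < 6 \<Longrightarrow> i < 3 \<Longrightarrow> iv k i < 3"
  by (drule k6, drule i3) (auto simp: iv_def)
lemma iv_pm: "k < 6 \<Longrightarrow> i < 3 \<Longrightarrow> iv k (pm k i) = i"
  by (drule k6, drule i3) (auto simp: iv_def pm_def)
lemma pm_iv: "k < 6 \<Longrightarrow> i < 3 \<Longrightarrow> pm k (iv k i) = i"
  by (drule k6, drule i3) (auto simp: iv_def pm_def)
lemma pm_inj: "k < 6 \<Longrightarrow> i < 3 \<Longrightarrow> j < 3 \<Longrightarrow> pm k i = pm k j \<longleftrightarrow> i = j"
  by (metis iv_pm)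

lemma sum6: "(\<Sum>k<6::nat. h k) = h 0 + h 1 + h 2 + h 3 + h 4 + h 5"
  by (simp add: numeral_eq_Suc)
lemma sum3: "(\<Sum>k<3::nat. h k) = h 0 + h 1 + h 2"
  by (simp add: numeral_eq_Suc)

lemma sum6_pm: "j < 3 \<Longrightarrow> (\<Sum>k<6. (H (pm k j) :: real)) = 2 * (H 0 + H 1 + H 2)"
  by (drule i3) (auto simp: sum6 pm_def)

definition ordv :: "(nat \<Rightarrow> real) \<Rightarrow> real" where
  "ordv y = (if y 0 > y 1 \<and> y 1 > y 2 then 1 else 0)"

definition rho :: "nat \<Rightarrow> (nat \<Rightarrow> real) \<Rightarrow> (nat \<Rightarrow> real)" where
  "rho k x = (\<lambda>i\<in>{..<3}. x (pm k i))"

definition mk :: "real \<Rightarrow> real \<Rightarrow> real \<Rightarrow> (nat \<Rightarrow> real)" where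
  "mk a b t = (\<lambda>i\<in>{..<3}. if i = 0 then a else if i = 1 then b else t)"

lemma rank_sum: "rank v i = (\<Sum>j<3. if v j > v i \<or> (v j = v i \<and> j < i) then 1 else 0)"
  unfolding rank_def bidders_def
  by (subst card_eq_sum, rule sum.inter_filter) simp

lemma rank_expl: "rank v i = (if v 0 > v i \<or> (v 0 = v i \<and> 0 < i) then 1 else 0)
   + (if v 1 > v i \<or> (v 1 = v i \<and> 1 < i) then 1 else 0)
   + (if v 2 > v i \<or> (v 2 = v i \<and> 2 < i) then 1 else 0)"
  unfolding rank_sum sum3 by simp


lemma ostat_expl:
  "ostat v 0 = max (max (v 0) (v 1)) (v 2) \<and>
        ostat v 1 = max (min (v 0) (v 1)) (min (max (v 0) (v 1)) (v 2))"
    unfolding ostat_def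
    by (cases "v 0 \<le> v 1"; cases "v 1 \<le> v 2"; cases "v 0 \<le> v 2")
       (auto simp add: upt_rec max_def min_def numeral_2_eq_2)

lemmas ostat0 = ostat_expl[THEN conjunct1]
lemmas ostat1 = ostat_expl[THEN conjunct2]

lemma rho_at: "i < 3 \<Longrightarrow> rho k y i = y (pm k i)"
  by (simp add: rho_def)

lemma rho_iv: "k < 6 \<Longrightarrow> i < 3 \<Longrightarrow> rho k y (iv k i) = y i"
  by (simp add: rho_def iv_lt pm_iv)

lemma rho_upd: "k < 6 \<Longrightarrow> j < 3 \<Longrightarrow> (rho k v)(j := w) = rho k (v(pm k j := w))"
  by (auto simp: rho_def fun_eq_iff pm_inj pm_lt)

lemma ordv_rho: "k < 6 \<Longrightarrow> ordv (\<lambda>c. rho k y (iv k c)) = ordv y"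
  by (simp add: ordv_def rho_iv)

lemma rank_rho: "y 0 > y 1 \<Longrightarrow> y 1 > y 2 \<Longrightarrow> k < 6 \<Longrightarrow> j < 3 \<Longrightarrow> rank (rho k y) j = pm k j"
proof -
  assume h: "y 0 > y 1" "y 1 > y 2" "k < 6" "j < 3"
  have F: "\<not> y 1 < y 2" "\<not> y 0 < y 1" "\<not> y 0 < y 2" "y 2 < y 0" "y 1 \<noteq> y 2" "y 0 \<noteq> y 1" "y 0 \<noteq> y 2"
    "y 2 \<noteq> y 1" "y 1 \<noteq> y 0" "y 2 \<noteq> y 0" using h(1,2) by auto
  have R: "rank (rho k y) j = (if y (pm k 0) > y (pm k j) \<or> (y (pm k 0) = y (pm k j) \<and> 0 < j) then 1 else 0)
   + (if y (pm k 1) > y (pm k j) \<or> (y (pm k 1) = y (pm k j) \<and> 1 < j) then 1 else 0)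
   + (if y (pm k 2) > y (pm k j) \<or> (y (pm k 2) = y (pm k j) \<and> 2 < j) then 1 else 0)"
    using h(4) by (simp add: rank_expl rho_at)
  from k6[OF h(3)] i3[OF h(4)] show ?thesis unfolding R using F h(1,2)
    by (elim disjE) (simp_all add: pm_def)
qed

lemma ostat_rho: "y 0 > y 1 \<Longrightarrow> y 1 > y 2 \<Longrightarrow> k < 6 \<Longrightarrow>
    ostat (rho k y) 0 = y 0 \<and> ostat (rho k y) 1 = y 1"
proof -
  assume h: "y 0 > y 1" "y 1 > y 2" "k < 6"
  have F: "\<not> y 1 < y 2" "\<not> y 0 < y 1" "\<not> y 0 < y 2" "y 2 < y 0"
    "\<not> y 1 \<le> y 2" "\<not> y 0 \<le> y 1" "\<not> y 0 \<le> y 2" "y 2 \<le> y 0" "y 2 \<le> y 1" "y 1 \<le> y 0"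
    using h(1,2) by auto
  from k6[OF h(3)] show ?thesis unfolding ostat0 ostat1 using F
    by (elim disjE) (simp_all add: rho_at pm_def max_def min_def)
qed

lemma rank_tie: "i < 3 \<Longrightarrow> (rank v i = 0 \<longrightarrow> v i = ostat v 0) \<and> (rank v i = 1 \<longrightarrow> v i = ostat v 1)"
proof -
  assume "i < 3"
  from i3[OF this] show ?thesis
  proof (elim disjE)
    assume "i = 0" then show ?thesis unfolding ostat0 ostat1 rank_expl
      by (cases "v 0 < v 1"; cases "v 1 < v 2"; cases "v 0 < v 2";
          cases "v 0 = v 1"; cases "v 1 = v 2"; cases "v 0 = v 2") (simp_all add: max_def min_def)
  next
    assume "i = 1" then show ?thesis unfolding ostat0 ostat1 rank_expl
      by (cases "v 0 < v 1"; cases "v 1 < v 2"; cases "v 0 < v 2";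
          cases "v 0 = v 1"; cases "v 1 = v 2"; cases "v 0 = v 2") (simp_all add: max_def min_def)
  next
    assume "i = 2" then show ?thesis unfolding ostat0 ostat1 rank_expl
      by (cases "v 0 < v 1"; cases "v 1 < v 2"; cases "v 0 < v 2";
          cases "v 0 = v 1"; cases "v 1 = v 2"; cases "v 0 = v 2") (simp_all add: max_def min_def)
  qed
qed

lemma region: "y 0 \<noteq> y 1 \<Longrightarrow> y 0 \<noteq> y 2 \<Longrightarrow> y 1 \<noteq> y 2 \<Longrightarrow>
   (\<Sum>k<6. ordv (\<lambda>c. y (iv k c))) = 1"
  unfolding sum6 ordv_def iv_def
  by (cases "y 0 < y 1"; cases "y 1 < y 2"; cases "y 0 < y 2") simp_all


lemma sets_val_dist[measurable_cong]: "sets (val_dist f) = sets borel"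
  by (simp add: val_dist_def)
lemma space_val_dist[simp]: "space (val_dist f) = UNIV"
  by (simp add: val_dist_def)
lemma prof_measure_eq: "prof_measure f = PiM {..<3} (\<lambda>_. val_dist f)"
  by (simp add: prof_measure_def bidders_def)

lemma lt3: "{..<3::nat} = {0,1,2}" by auto

locale L0 =
  fixes f :: "real \<Rightarrow> real" and vbar :: real
  assumes f_meas: "f \<in> borel_measurable borel"
    and f_zero: "\<And>x. x \<notin> {0..vbar} \<Longrightarrow> f x = 0"
    and f_prob: "prob_space (val_dist f)"
begin

abbreviation "D \<equiv> val_dist f"
abbreviation "M \<equiv> PiM {..<3::nat} (\<lambda>_. D)"

lemmas [measurable] = f_meas

lemma D_prob: "prob_space D" by (rule f_prob)

lemma M_prob: "prob_space M"
  by (rule prob_space_PiM) (simp add: D_prob)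

sublocale Dp: prob_space D by (rule D_prob)
sublocale Mp: prob_space M by (rule M_prob)
sublocale MD: pair_prob_space M D by unfold_locales
sublocale PS: product_prob_space "\<lambda>_::nat. D" by unfold_locales

lemma space_M: "space M = PiE {..<3} (\<lambda>_. UNIV)"
  by (simp add: space_PiM)

lemma D_single: "emeasure D {x} = 0"
proof -
  have "{x} \<in> null_sets (density lborel (\<lambda>x. ennreal (f x)))"
  proof (subst null_sets_density_iff)
    have "AE y in lborel. y \<in> {x} \<longrightarrow> ennreal (f y) = 0"
      using AE_lborel_singleton[of x] by eventually_elim auto
    then show "{x} \<in> sets lborel \<and> (AE y in lborel. y \<in> {x} \<longrightarrow> ennreal (f y) = 0)" by simp
  qed simp
  then show ?thesis by (simp add: val_dist_def null_setsD1)
qed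

lemma D_out: "emeasure D (- {0..vbar}) = 0"
proof -
  have "- {0..vbar} \<in> null_sets (density lborel (\<lambda>x. ennreal (f x)))"
    by (subst null_sets_density_iff) (auto simp: f_meas f_zero)
  then show ?thesis by (simp add: val_dist_def null_setsD1)
qed

lemma AE_D_box: "AE t in D. t \<in> {0..vbar}"
  using D_out by (intro AE_I[of _ _ "- {0..vbar}"]) auto

lemma AE_D_ne: "AE t in D. t \<noteq> x"
  using D_single by (intro AE_I[of _ _ "{x}"]) auto

lemma T_meas: "j < 3 \<Longrightarrow> (\<lambda>(v, t). v(j := t)) \<in> measurable (M \<Otimes>\<^sub>M D) M"
proof -
  assume j: "j < 3"
  have "(\<lambda>x. (fst x)(j := snd x)) \<in> measurable (M \<Otimes>\<^sub>M D) M"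
    by (rule measurable_fun_upd[where J="{..<3}"]) (use j in auto)
  then show ?thesis by (simp add: case_prod_beta')
qed

lemma DISTR: assumes j: "j < 3"
  shows "distr (M \<Otimes>\<^sub>M D) M (\<lambda>(v, t). v(j := t)) = M"
proof (rule PS.PiM_eqI)
  show "sets (distr (M \<Otimes>\<^sub>M D) M (\<lambda>(v, t). v(j := t))) = sets M" by simp
next
  fix A :: "nat \<Rightarrow> real set" assume A: "\<And>i. i \<in> {..<3} \<Longrightarrow> A i \<in> sets D"
  let ?B = "A(j := UNIV)"
  have pre: "(\<lambda>(v, t). v(j := t)) -` PiE {..<3} A \<inter> space (M \<Otimes>\<^sub>M D) = PiE {..<3} ?B \<times> A j"
  proof (intro set_eqI iffI)
    fix z assume z: "z \<in> (\<lambda>(v, t). v(j := t)) -` PiE {..<3} A \<inter> space (M \<Otimes>\<^sub>M D)"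
    obtain v t where zz: "z = (v, t)" by (cases z)
    have v: "v \<in> extensional {..<3}" and vA: "\<And>i. i < 3 \<Longrightarrow> (v(j := t)) i \<in> A i"
      using z by (auto simp: zz space_pair_measure space_PiM PiE_iff)
    have "v \<in> PiE {..<3} ?B"
    proof (unfold PiE_iff, intro conjI ballI v)
      fix i :: nat assume "i \<in> {..<3}" then show "v i \<in> ?B i" using vA[of i] by (cases "i = j") auto
    qed
    moreover have "t \<in> A j" using vA[of j] j by simp
    ultimately show "z \<in> PiE {..<3} ?B \<times> A j" by (simp add: zz)
  next
    fix z assume z: "z \<in> PiE {..<3} ?B \<times> A j"
    obtain v t where zz: "z = (v, t)" by (cases z)
    have v: "v \<in> extensional {..<3}" and vB: "\<And>i. i < 3 \<Longrightarrow> v i \<in> ?B i" and t: "t \<in> A j"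
      using z by (auto simp: zz PiE_iff)
    have "v(j := t) \<in> PiE {..<3} A"
    proof (unfold PiE_iff, intro conjI ballI)
      fix i :: nat assume "i \<in> {..<3}" then show "(v(j := t)) i \<in> A i" using vB[of i] t by (cases "i = j") auto
    next
      show "v(j := t) \<in> extensional {..<3}" using v j by (auto simp: extensional_def)
    qed
    moreover have "v \<in> space M" using v by (auto simp: space_PiM PiE_iff)
    ultimately show "z \<in> (\<lambda>(v, t). v(j := t)) -` PiE {..<3} A \<inter> space (M \<Otimes>\<^sub>M D)"
      by (simp add: zz space_pair_measure)
  qed
  have B: "\<And>i. i \<in> {..<3} \<Longrightarrow> ?B i \<in> sets D" using A by auto
  have "emeasure (distr (M \<Otimes>\<^sub>M D) M (\<lambda>(v, t). v(j := t))) (PiE {..<3} A)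
      = emeasure (M \<Otimes>\<^sub>M D) (PiE {..<3} ?B \<times> A j)"
    using A j by (subst emeasure_distr) (auto simp: T_meas pre intro!: sets_PiM_I_finite)
  also have "\<dots> = emeasure M (PiE {..<3} ?B) * emeasure D (A j)"
  proof (rule Dp.emeasure_pair_measure_Times)
    show "PiE {..<3} ?B \<in> sets M" using B by (intro sets_PiM_I_finite) auto
    show "A j \<in> sets D" using A j by auto
  qed
  also have "emeasure M (PiE {..<3} ?B) = (\<Prod>i<3. emeasure D (?B i))"
    using B by (intro PS.emeasure_PiM) auto
  also have "\<dots> = (\<Prod>i\<in>{..<3}-{j}. emeasure D (A i))"
    using j by (subst prod.remove[of _ j]) (auto intro!: prod.cong simp: Dp.emeasure_space_1[simplified])
  also have "\<dots> * emeasure D (A j) = (\<Prod>i<3. emeasure D (A i))"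
    using j by (subst (2) prod.remove[of _ j]) (auto simp: mult.commute)
  finally show "emeasure (distr (M \<Otimes>\<^sub>M D) M (\<lambda>(v, t). v(j := t))) (PiE {..<3} A) = (\<Prod>i<3. emeasure D (A i))" .
qed simp


lemma PD_prob: "prob_space (M \<Otimes>\<^sub>M D)"
  by (rule prob_space_pair) (simp_all add: M_prob D_prob)

lemma int_bdd: fixes \<Psi> :: "(nat \<Rightarrow> real) \<Rightarrow> real" and B :: real shows "\<Psi> \<in> borel_measurable M \<Longrightarrow> (\<And>v. v \<in> space M \<Longrightarrow> \<bar>\<Psi> v\<bar> \<le> B) \<Longrightarrow> integrable M \<Psi>"
  by (rule Mp.integrable_const_bound[where B=B]) auto

lemma int_bdd_D: fixes \<Psi> :: "real \<Rightarrow> real" and B :: real shows "\<Psi> \<in> borel_measurable D \<Longrightarrow> (\<And>v. \<bar>\<Psi> v\<bar> \<le> B) \<Longrightarrow> integrable D \<Psi>"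
  by (rule Dp.integrable_const_bound[where B=B]) auto

lemma L2:
  fixes \<Psi> :: "(nat \<Rightarrow> real) \<Rightarrow> real" and B :: real
  assumes j: "j < 3" and m: "\<Psi> \<in> borel_measurable M" and b: "\<And>v. v \<in> space M \<Longrightarrow> \<bar>\<Psi> v\<bar> \<le> B"
  shows "(\<integral>v. \<Psi> v \<partial>M) = (\<integral>v. \<integral>t. \<Psi> (v(j := t)) \<partial>D \<partial>M)"
proof -
  have Tm: "(\<lambda>(v, t). v(j := t)) \<in> measurable (M \<Otimes>\<^sub>M D) M" by (rule T_meas[OF j])
  have "(\<integral>v. \<Psi> v \<partial>M) = (\<integral>v. \<Psi> v \<partial>distr (M \<Otimes>\<^sub>M D) M (\<lambda>(v, t). v(j := t)))"
    by (simp add: DISTR[OF j])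
  also have "\<dots> = (\<integral>z. \<Psi> ((\<lambda>(v, t). v(j := t)) z) \<partial>(M \<Otimes>\<^sub>M D))"
    by (rule integral_distr[OF Tm m])
  also have "\<dots> = (\<integral>v. \<integral>t. \<Psi> (v(j := t)) \<partial>D \<partial>M)"
  proof -
    have "integrable (M \<Otimes>\<^sub>M D) (\<lambda>z. \<Psi> ((\<lambda>(v, t). v(j := t)) z))"
    proof (rule finite_measure.integrable_const_bound[where B=B])
      show "finite_measure (M \<Otimes>\<^sub>M D)" by (rule prob_space.finite_measure[OF PD_prob])
      show "AE z in M \<Otimes>\<^sub>M D. norm (\<Psi> ((\<lambda>(v, t). v(j := t)) z)) \<le> B"
        using measurable_space[OF Tm] b by (intro AE_I2) auto
      show "(\<lambda>z. \<Psi> ((\<lambda>(v, t). v(j := t)) z)) \<in> borel_measurable (M \<Otimes>\<^sub>M D)"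
        using measurable_comp[OF Tm m] by (simp add: comp_def)
    qed
    from MD.integral_fst'[OF this] show ?thesis by simp
  qed
  finally show ?thesis .
qed

lemma AE_via:
  assumes j: "j < 3" and S: "{v \<in> space M. P v} \<in> sets M"
    and h: "\<And>v. v \<in> space M \<Longrightarrow> AE t in D. P (v(j := t))"
  shows "AE v in M. P v"
proof -
  have Tm: "(\<lambda>(v, t). v(j := t)) \<in> measurable (M \<Otimes>\<^sub>M D) M" by (rule T_meas[OF j])
  have "AE z in M \<Otimes>\<^sub>M D. P ((\<lambda>(v, t). v(j := t)) z)"
  proof (rule MD.AE_pair_measure)
    have "{z \<in> space (M \<Otimes>\<^sub>M D). P ((\<lambda>(v, t). v(j := t)) z)} = (\<lambda>(v, t). v(j := t)) -` {v \<in> space M. P v} \<inter> space (M \<Otimes>\<^sub>M D)"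
      using measurable_space[OF Tm] by auto
    then show "{z \<in> space (M \<Otimes>\<^sub>M D). P ((\<lambda>(v, t). v(j := t)) z)} \<in> sets (M \<Otimes>\<^sub>M D)"
      using measurable_sets[OF Tm S] by simp
    show "AE x in M. AE y in D. P ((\<lambda>(v, t). v(j := t)) (x, y))"
    proof (rule AE_I2)
      fix x assume "x \<in> space M" then show "AE y in D. P ((\<lambda>(v, t). v(j := t)) (x, y))"
        using h by simp
    qed
  qed
  then have "AE v in distr (M \<Otimes>\<^sub>M D) M (\<lambda>(v, t). v(j := t)). P v"
    using S Tm by (subst AE_distr_iff) auto
  then show ?thesis unfolding DISTR[OF j] .
qed

lemma comp_meas: "a < 3 \<Longrightarrow> (\<lambda>v. v a) \<in> borel_measurable M"
  by (subst measurable_cong_sets[OF refl sets_val_dist[symmetric]]) (rule measurable_component_singleton, simp)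

lemma comp_meas': "a < 3 \<Longrightarrow> (\<lambda>v. v a) \<in> borel_measurable (PiM {..<3::nat} (\<lambda>_. borel))"
  by (rule measurable_component_singleton) simp

lemma AE_ne: "a < 3 \<Longrightarrow> b < 3 \<Longrightarrow> a \<noteq> b \<Longrightarrow> AE v in M. v a \<noteq> v b"
proof (rule AE_via[of b])
  assume ab: "a < 3" "b < 3" "a \<noteq> b"
  have "{v \<in> space M. v a = v b} \<in> sets M"
    by (rule measurable_equality_set) (simp_all add: comp_meas ab)
  moreover have "{v \<in> space M. v a \<noteq> v b} = space M - {v \<in> space M. v a = v b}" by auto
  ultimately show "{v \<in> space M. v a \<noteq> v b} \<in> sets M" by auto
  fix v assume "v \<in> space M"
  show "AE t in D. (v(b := t)) a \<noteq> (v(b := t)) b"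
    using AE_D_ne[of "v a"] by eventually_elim (use ab in auto)
qed

lemma AE_ne_w: "a < 3 \<Longrightarrow> AE v in M. v a \<noteq> w"
proof (rule AE_via[of a])
  assume a: "a < 3"
  note [measurable] = comp_meas'[OF a]
  show "{v \<in> space M. v a \<noteq> w} \<in> sets M" by measurable
  fix v assume "v \<in> space M"
  show "AE t in D. (v(a := t)) a \<noteq> w"
    using AE_D_ne[of w] by eventually_elim auto
qed

lemma AE_coord_box: "a < 3 \<Longrightarrow> AE v in M. v a \<in> {0..vbar}"
proof (rule AE_via[of a])
  assume a: "a < 3"
  note [measurable] = comp_meas'[OF a]
  show "{v \<in> space M. v a \<in> {0..vbar}} \<in> sets M" by measurable
  fix v assume "v \<in> space M"
  show "AE t in D. (v(a := t)) a \<in> {0..vbar}"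
    using AE_D_box by eventually_elim auto
qed

lemma AE_box: "AE v in M. v \<in> box vbar"
proof -
  have "AE v in M. v 0 \<in> {0..vbar}" "AE v in M. v 1 \<in> {0..vbar}" "AE v in M. v 2 \<in> {0..vbar}"
    by (rule AE_coord_box; simp)+
  then have "AE v in M. v 0 \<in> {0..vbar} \<and> v 1 \<in> {0..vbar} \<and> v 2 \<in> {0..vbar}"
    by eventually_elim auto
  then show ?thesis
    by eventually_elim (simp add: box_def bidders_def lt3)
qed

lemma AE_distinct: "AE v in M. v 0 \<noteq> v 1 \<and> v 0 \<noteq> v 2 \<and> v 1 \<noteq> v 2"
proof -
  have "AE v in M. v 0 \<noteq> v 1" "AE v in M. v 0 \<noteq> v 2" "AE v in M. v 1 \<noteq> v 2"
    by (rule AE_ne; simp)+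
  then show ?thesis by eventually_elim auto
qed

lemma rho_meas: "k < 6 \<Longrightarrow> rho k \<in> measurable M M"
  unfolding rho_def by (rule measurable_restrict) (auto intro: measurable_component_singleton pm_lt)

lemma reindex:
  fixes G :: "(nat \<Rightarrow> real) \<Rightarrow> real"
  assumes k: "k < 6" and G: "G \<in> borel_measurable M"
  shows "(\<integral>v. G (rho k v) \<partial>M) = (\<integral>v. G v \<partial>M)"
proof -
  have "distr M (PiM {..<3} (\<lambda>i. D)) (\<lambda>\<omega>. \<lambda>n\<in>{..<3}. \<omega> (pm k n)) = PiM {..<3} (\<lambda>i. D)"
    using k by (intro distr_PiM_reindex) (auto simp: D_prob inj_on_def pm_inj pm_lt)
  then have "distr M M (rho k) = M" by (simp add: rho_def[abs_def])
  then have "(\<integral>v. G v \<partial>M) = (\<integral>v. G v \<partial>distr M M (rho k))" by simp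
  also have "\<dots> = (\<integral>v. G (rho k v) \<partial>M)" by (rule integral_distr[OF rho_meas[OF k] G])
  finally show ?thesis by simp
qed

end


lemma ordv_meas:
  assumes "\<And>c. c < 3 \<Longrightarrow> (\<lambda>v. g v c) \<in> borel_measurable N"
  shows "(\<lambda>v. ordv (g v)) \<in> borel_measurable N"
proof -
  have [measurable]: "(\<lambda>v. g v 0) \<in> borel_measurable N" "(\<lambda>v. g v 1) \<in> borel_measurable N"
    "(\<lambda>v. g v 2) \<in> borel_measurable N" using assms by auto
  show ?thesis unfolding ordv_def by measurable
qed

context L0 begin

lemma upd_meas: "j < 3 \<Longrightarrow> (\<lambda>v. v(j := w)) \<in> measurable M M"
  by (rule measurable_fun_upd[where J="{..<3}"]) auto

lemma ordv_01: "ordv y = 0 \<or> ordv y = 1" by (simp add: ordv_def)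

lemma REGION:
  fixes \<Psi> :: "(nat \<Rightarrow> real) \<Rightarrow> real" and B :: real
  assumes m: "\<Psi> \<in> borel_measurable M" and b: "\<And>v. v \<in> space M \<Longrightarrow> \<bar>\<Psi> v\<bar> \<le> B"
    and hm: "\<And>c. c < 3 \<Longrightarrow> (\<lambda>v. h v c) \<in> borel_measurable M"
    and hd: "AE v in M. h v 0 \<noteq> h v 1 \<and> h v 0 \<noteq> h v 2 \<and> h v 1 \<noteq> h v 2"
  shows "(\<integral>v. \<Psi> v \<partial>M) = (\<Sum>k<6. \<integral>v. ordv (\<lambda>c. h v (iv k c)) * \<Psi> v \<partial>M)"
proof -
  have "(\<integral>v. \<Psi> v \<partial>M) = (\<integral>v. (\<Sum>k<6. ordv (\<lambda>c. h v (iv k c)) * \<Psi> v) \<partial>M)"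
  proof (rule integral_cong_AE)
    show "AE v in M. \<Psi> v = (\<Sum>k<6. ordv (\<lambda>c. h v (iv k c)) * \<Psi> v)"
      using hd proof eventually_elim
      case (elim v)
      have "(\<Sum>k<6. ordv (\<lambda>c. h v (iv k c)) * \<Psi> v) = (\<Sum>k<6. ordv (\<lambda>c. h v (iv k c))) * \<Psi> v"
        by (simp add: sum_distrib_right)
      also have "\<dots> = \<Psi> v" using region[of "h v"] elim by simp
      finally show ?case by simp
    qed
    show "(\<lambda>v. \<Sum>k<6. ordv (\<lambda>c. h v (iv k c)) * \<Psi> v) \<in> borel_measurable M"
      by (intro borel_measurable_sum borel_measurable_times ordv_meas m hm iv_lt) auto
  qed (rule m)
  also have "\<dots> = (\<Sum>k<6. \<integral>v. ordv (\<lambda>c. h v (iv k c)) * \<Psi> v \<partial>M)"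
  proof (rule Bochner_Integration.integral_sum)
    fix k :: nat assume k: "k \<in> {..<6}"
    show "integrable M (\<lambda>v. ordv (\<lambda>c. h v (iv k c)) * \<Psi> v)"
    proof (rule int_bdd[where B=B])
      show "(\<lambda>v. ordv (\<lambda>c. h v (iv k c)) * \<Psi> v) \<in> borel_measurable M"
        using k by (intro borel_measurable_times ordv_meas m hm iv_lt) auto
      fix v assume "v \<in> space M"
      then show "\<bar>ordv (\<lambda>c. h v (iv k c)) * \<Psi> v\<bar> \<le> B"
        using b[of v] ordv_01[of "\<lambda>c. h v (iv k c)"] by (auto simp: abs_mult)
    qed
  qed
  finally show ?thesis .
qed

lemma DECOMP:
  fixes \<Psi> :: "(nat \<Rightarrow> real) \<Rightarrow> real" and B :: real
  assumes m: "\<Psi> \<in> borel_measurable M" and b: "\<And>v. v \<in> space M \<Longrightarrow> \<bar>\<Psi> v\<bar> \<le> B"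
  shows "(\<integral>v. \<Psi> v \<partial>M) = (\<Sum>k<6. \<integral>v. ordv v * \<Psi> (rho k v) \<partial>M)"
proof -
  have "(\<integral>v. \<Psi> v \<partial>M) = (\<Sum>k<6. \<integral>v. ordv (\<lambda>c. v (iv k c)) * \<Psi> v \<partial>M)"
    by (rule REGION[OF m b comp_meas AE_distinct])
  also have "\<dots> = (\<Sum>k<6. \<integral>v. ordv v * \<Psi> (rho k v) \<partial>M)"
  proof (rule sum.cong[OF refl])
    fix k :: nat assume k: "k \<in> {..<6}"
    have G: "(\<lambda>v. ordv (\<lambda>c. v (iv k c)) * \<Psi> v) \<in> borel_measurable M"
      using k by (intro borel_measurable_times ordv_meas m comp_meas iv_lt) auto
    have "(\<integral>v. ordv (\<lambda>c. v (iv k c)) * \<Psi> v \<partial>M) = (\<integral>v. ordv (\<lambda>c. rho k v (iv k c)) * \<Psi> (rho k v) \<partial>M)"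
      using reindex[OF _ G, of k] k by simp
    also have "\<dots> = (\<integral>v. ordv v * \<Psi> (rho k v) \<partial>M)"
      using k by (simp add: ordv_rho)
    finally show "(\<integral>v. ordv (\<lambda>c. v (iv k c)) * \<Psi> v \<partial>M) = (\<integral>v. ordv v * \<Psi> (rho k v) \<partial>M)" .
  qed
  finally show ?thesis .
qed

lemma INTERIM:
  fixes \<Phi> :: "(nat \<Rightarrow> real) \<Rightarrow> real" and B :: real
  assumes j: "j < 3" and m: "\<Phi> \<in> borel_measurable M" and b: "\<And>v. v \<in> space M \<Longrightarrow> \<bar>\<Phi> v\<bar> \<le> B"
  shows "(\<integral>v. \<Phi> (v(j := w)) \<partial>M) = (\<Sum>k<6. \<integral>v. ordv (v(pm k j := w)) * \<Phi> (rho k (v(pm k j := w))) \<partial>M)"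
proof -
  have um: "(\<lambda>v. v(j := w)) \<in> measurable M M" by (rule upd_meas[OF j])
  have m2: "(\<lambda>v. \<Phi> (v(j := w))) \<in> borel_measurable M"
    using measurable_comp[OF um m] by (simp add: comp_def)
  have b2: "\<And>v. v \<in> space M \<Longrightarrow> \<bar>\<Phi> (v(j := w))\<bar> \<le> B"
    using b measurable_space[OF um] by auto
  have hm: "\<And>c. c < 3 \<Longrightarrow> (\<lambda>v. (v(j := w)) c) \<in> borel_measurable M"
  proof -
    fix c :: nat assume c: "c < 3"
    show "(\<lambda>v. (v(j := w)) c) \<in> borel_measurable M"
      using c comp_meas[of c] by (cases "c = j") auto
  qed
  have hd: "AE v in M. (v(j := w)) 0 \<noteq> (v(j := w)) 1 \<and> (v(j := w)) 0 \<noteq> (v(j := w)) 2 \<and> (v(j := w)) 1 \<noteq> (v(j := w)) 2"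
  proof -
    have "AE v in M. v 0 \<noteq> w" "AE v in M. v 1 \<noteq> w" "AE v in M. v 2 \<noteq> w"
      by (rule AE_ne_w; simp)+
    with AE_distinct show ?thesis
      by eventually_elim (auto simp: fun_upd_def)
  qed
  have "(\<integral>v. \<Phi> (v(j := w)) \<partial>M) = (\<Sum>k<6. \<integral>v. ordv (\<lambda>c. (v(j := w)) (iv k c)) * \<Phi> (v(j := w)) \<partial>M)"
    by (rule REGION[OF m2 b2 hm hd])
  also have "\<dots> = (\<Sum>k<6. \<integral>v. ordv (v(pm k j := w)) * \<Phi> (rho k (v(pm k j := w))) \<partial>M)"
  proof (rule sum.cong[OF refl])
    fix k :: nat assume k: "k \<in> {..<6}"
    have G: "(\<lambda>v. ordv (\<lambda>c. (v(j := w)) (iv k c)) * \<Phi> (v(j := w))) \<in> borel_measurable M"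
      using k by (intro borel_measurable_times ordv_meas m2 hm iv_lt) auto
    have "(\<integral>v. ordv (\<lambda>c. (v(j := w)) (iv k c)) * \<Phi> (v(j := w)) \<partial>M)
        = (\<integral>v. ordv (\<lambda>c. ((rho k v)(j := w)) (iv k c)) * \<Phi> ((rho k v)(j := w)) \<partial>M)"
      using reindex[OF _ G, of k] k by simp
    also have "\<dots> = (\<integral>v. ordv (v(pm k j := w)) * \<Phi> (rho k (v(pm k j := w))) \<partial>M)"
      using k j by (simp add: rho_upd ordv_rho)
    finally show "(\<integral>v. ordv (\<lambda>c. (v(j := w)) (iv k c)) * \<Phi> (v(j := w)) \<partial>M)
        = (\<integral>v. ordv (v(pm k j := w)) * \<Phi> (rho k (v(pm k j := w))) \<partial>M)" .
  qed
  finally show ?thesis .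
qed

end


lemma rank_bool: "rank v i = of_bool (v 0 > v i \<or> (v 0 = v i \<and> 0 < i))
   + of_bool (v 1 > v i \<or> (v 1 = v i \<and> 1 < i))
   + of_bool (v 2 > v i \<or> (v 2 = v i \<and> 2 < i))"
  by (simp only: rank_expl of_bool_def)

lemma rank_real: "real (rank v i) = (if v 0 > v i \<or> (v 0 = v i \<and> 0 < i) then 1 else 0)
   + (if v 1 > v i \<or> (v 1 = v i \<and> 1 < i) then 1 else 0)
   + (if v 2 > v i \<or> (v 2 = v i \<and> 2 < i) then 1 else 0)"
  by (subst rank_bool, simp only: of_nat_add of_nat_of_bool, simp only: of_bool_def)

lemma rank_meas:
  fixes g :: "'a \<Rightarrow> nat \<Rightarrow> real"
  assumes "\<And>c. c < 3 \<Longrightarrow> (\<lambda>x. g x c) \<in> borel_measurable N" and i: "i < 3"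
  shows "(\<lambda>x. real (rank (g x) i)) \<in> borel_measurable N"
proof -
  have [measurable]: "(\<lambda>v. g v 0) \<in> borel_measurable N" "(\<lambda>v. g v 1) \<in> borel_measurable N"
    "(\<lambda>v. g v 2) \<in> borel_measurable N" "(\<lambda>v. g v i) \<in> borel_measurable N" using assms by auto
  show ?thesis unfolding rank_real by measurable
qed


lemma eff_real: "eff_alloc i v = (if real (rank v i) < 2 then 1 else 0)"
  by (simp add: eff_alloc_def)

lemma eff_01: "eff_alloc i v = 0 \<or> eff_alloc i v = 1"
  by (simp add: eff_alloc_def)

lemma rank_pay_real: "rank_pay Q1 Q2 i v = (if real (rank v i) = 0 then Q1 (ostat v 0) (ostat v 1)
   else if real (rank v i) = 1 then Q2 (ostat v 0) (ostat v 1) else 0)"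
  by (simp add: rank_pay_def)

lemma pair_comp_meas:
  fixes Q :: "real \<Rightarrow> real \<Rightarrow> real"
  assumes Q: "(\<lambda>z. Q (fst z) (snd z)) \<in> borel_measurable borel"
    and a: "a \<in> borel_measurable N" and b: "b \<in> borel_measurable N"
  shows "(\<lambda>x. Q (a x) (b x)) \<in> borel_measurable N"
proof -
  have "(\<lambda>x. (a x, b x)) \<in> measurable N (borel \<Otimes>\<^sub>M borel)"
    using a b by (rule measurable_Pair)
  then have "(\<lambda>x. (a x, b x)) \<in> measurable N borel" by (simp add: borel_prod)
  from measurable_comp[OF this Q] show ?thesis by (simp add: comp_def)
qed

lemma eff_meas:
  fixes g :: "'a \<Rightarrow> nat \<Rightarrow> real"
  assumes "\<And>c. c < 3 \<Longrightarrow> (\<lambda>x. g x c) \<in> borel_measurable N" and i: "i < 3"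
  shows "(\<lambda>x. eff_alloc i (g x)) \<in> borel_measurable N"
proof -
  have [measurable]: "(\<lambda>x. real (rank (g x) i)) \<in> borel_measurable N" by (rule rank_meas[OF assms])
  show ?thesis unfolding eff_real by measurable
qed

lemma rank_pay_meas:
  fixes g :: "'a \<Rightarrow> nat \<Rightarrow> real"
  assumes Q1: "(\<lambda>z. Q1 (fst z) (snd z)) \<in> borel_measurable borel"
    and Q2: "(\<lambda>z. Q2 (fst z) (snd z)) \<in> borel_measurable borel"
    and g: "\<And>c. c < 3 \<Longrightarrow> (\<lambda>x. g x c) \<in> borel_measurable N" and i: "i < 3"
  shows "(\<lambda>x. rank_pay Q1 Q2 i (g x)) \<in> borel_measurable N"
proof -
  have [measurable]: "(\<lambda>v. g v 0) \<in> borel_measurable N" "(\<lambda>v. g v 1) \<in> borel_measurable N"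
    "(\<lambda>v. g v 2) \<in> borel_measurable N" using g by auto
  have o0[measurable]: "(\<lambda>x. ostat (g x) 0) \<in> borel_measurable N" unfolding ostat0 by measurable
  have o1[measurable]: "(\<lambda>x. ostat (g x) 1) \<in> borel_measurable N" unfolding ostat1 by measurable
  have [measurable]: "(\<lambda>x. real (rank (g x) i)) \<in> borel_measurable N" by (rule rank_meas[OF g i])
  have [measurable]: "(\<lambda>x. Q1 (ostat (g x) 0) (ostat (g x) 1)) \<in> borel_measurable N"
    by (rule pair_comp_meas[OF Q1 o0 o1])
  have [measurable]: "(\<lambda>x. Q2 (ostat (g x) 0) (ostat (g x) 1)) \<in> borel_measurable N"
    by (rule pair_comp_meas[OF Q2 o0 o1])
  show ?thesis unfolding rank_pay_real by measurable
qed


lemma box_iff: "v \<in> box vbar \<longleftrightarrow> v 0 \<in> {0..vbar} \<and> v 1 \<in> {0..vbar} \<and> v 2 \<in> {0..vbar}"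
  by (simp add: box_def bidders_def lt3)

lemma rho_box: "k < 6 \<Longrightarrow> rho k y \<in> box vbar \<longleftrightarrow> y \<in> box vbar"
proof -
  assume k: "k < 6"
  have e: "rho k y 0 = y (pm k 0)" "rho k y 1 = y (pm k 1)" "rho k y 2 = y (pm k 2)"
    by (simp_all add: rho_at)
  from k6[OF k] show ?thesis unfolding box_iff e
    by (elim disjE) (auto simp: pm_def)
qed

lemma mk_at: "mk a b t 0 = a" "mk a b t 1 = b" "mk a b t 2 = t"
  by (simp_all add: mk_def)

lemma mk_box: "mk a b t \<in> box vbar \<longleftrightarrow> a \<in> {0..vbar} \<and> b \<in> {0..vbar} \<and> t \<in> {0..vbar}"
  unfolding box_iff mk_at ..

lemma upd_box: "v \<in> box vbar \<Longrightarrow> w \<in> {0..vbar} \<Longrightarrow> j < 3 \<Longrightarrow> v(j := w) \<in> box vbar"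
  by (auto simp: box_def bidders_def)

lemma rho_mk_iv: "k < 6 \<Longrightarrow> rho k (mk a b t) (iv k 0) = a \<and> rho k (mk a b t) (iv k 1) = b"
  by (simp add: rho_iv mk_def)

lemma ostat_box: "v \<in> box vbar \<Longrightarrow> ostat v 0 \<in> {0..vbar} \<and> ostat v 1 \<in> {0..vbar}"
  unfolding box_iff ostat0 ostat1 by (auto simp: max_def min_def)

locale L1 = L0 +
  fixes \<pi> :: "nat \<Rightarrow> (nat \<Rightarrow> real) \<Rightarrow> real"
  assumes \<pi>_pay: "payment_rule f vbar \<pi>"
    and \<pi>_impl: "implements f vbar eff_alloc \<pi>"
    and \<pi>_IR: "ex_post_IR vbar eff_alloc \<pi>"
begin

definition p :: "nat \<Rightarrow> (nat \<Rightarrow> real) \<Rightarrow> real" where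
  "p j v = (if v \<in> box vbar then \<pi> j v else 0)"

lemma box_sets: "{v \<in> space M. v \<in> box vbar} \<in> sets M"
proof -
  note [measurable] = comp_meas'[of 0] comp_meas'[of 1] comp_meas'[of 2]
  show ?thesis unfolding box_iff by measurable
qed

lemma \<pi>_meas: "j < 3 \<Longrightarrow> \<pi> j \<in> borel_measurable M"
  using \<pi>_pay by (simp add: payment_rule_def bidders_def prof_measure_eq)

lemma p_meas: "j < 3 \<Longrightarrow> p j \<in> borel_measurable M"
proof -
  assume j: "j < 3"
  have [measurable]: "\<pi> j \<in> borel_measurable M" by (rule \<pi>_meas[OF j])
  have [measurable]: "Measurable.pred M (\<lambda>v. v \<in> box vbar)" using box_sets by (simp add: pred_def)
  show ?thesis unfolding p_def[abs_def] by measurable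
qed

lemma p_nn: "j < 3 \<Longrightarrow> 0 \<le> p j v"
  using \<pi>_pay by (auto simp: p_def payment_rule_def bidders_def)

lemma p_le: "j < 3 \<Longrightarrow> v \<in> box vbar \<Longrightarrow> p j v \<le> v j * eff_alloc j v"
  using \<pi>_IR by (auto simp: p_def ex_post_IR_def bidders_def)

lemma p_le_v: "j < 3 \<Longrightarrow> v \<in> box vbar \<Longrightarrow> p j v \<le> v j"
proof -
  assume j: "j < 3" and v: "v \<in> box vbar"
  have "v j \<ge> 0" using v j by (auto simp: box_def bidders_def)
  then show ?thesis using p_le[OF j v] eff_01[of j v] by auto
qed

lemma vbar_nn: "0 \<le> vbar"
proof (rule ccontr)
  assume "\<not> 0 \<le> vbar"
  then have "emeasure D UNIV = 0" using D_out by simp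
  then show False using Dp.emeasure_space_1 by simp
qed

lemma p_bd: "j < 3 \<Longrightarrow> p j v \<le> vbar"
proof (cases "v \<in> box vbar")
  case True
  assume j: "j < 3"
  have "v j \<le> vbar" using True j by (auto simp: box_def bidders_def)
  then show ?thesis using p_le_v[OF j True] by simp
next
  case False then show ?thesis using vbar_nn by (simp add: p_def)
qed

lemma p_abs: "j < 3 \<Longrightarrow> \<bar>p j v\<bar> \<le> vbar"
  using p_nn[of j v] p_bd[of j v] by simp

lemma p_zero: "j < 3 \<Longrightarrow> rank v j \<ge> 2 \<Longrightarrow> p j v = 0"
proof -
  assume j: "j < 3" and r: "rank v j \<ge> 2"
  show ?thesis
  proof (cases "v \<in> box vbar")
    case True
    have "eff_alloc j v = 0" using r by (simp add: eff_alloc_def)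
    then show ?thesis using p_le[OF j True] p_nn[OF j, of v] by simp
  qed (simp add: p_def)
qed

lemma p_interim: "j < 3 \<Longrightarrow> w \<in> {0..vbar} \<Longrightarrow> (\<integral>v. p j (v(j := w)) \<partial>M) = zfun f eff_alloc j w"
proof -
  assume j: "j < 3" and w: "w \<in> {0..vbar}"
  have m1: "(\<lambda>v. p j (v(j := w))) \<in> borel_measurable M"
    using measurable_comp[OF upd_meas[OF j] p_meas[OF j]] by (simp add: comp_def)
  have m2: "(\<lambda>v. \<pi> j (v(j := w))) \<in> borel_measurable M"
    using measurable_comp[OF upd_meas[OF j] \<pi>_meas[OF j]] by (simp add: comp_def)
  have "(\<integral>v. p j (v(j := w)) \<partial>M) = (\<integral>v. \<pi> j (v(j := w)) \<partial>M)"
  proof (rule integral_cong_AE[OF m1 m2])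
    show "AE v in M. p j (v(j := w)) = \<pi> j (v(j := w))"
      using AE_box by eventually_elim (simp add: p_def upd_box[OF _ w j])
  qed
  also have "\<dots> = interim f \<pi> j w" by (simp add: interim_def prof_measure_eq)
  also have "\<dots> = zfun f eff_alloc j w" using \<pi>_impl j w by (simp add: implements_def bidders_def)
  finally show ?thesis .
qed

end


context L1 begin

definition Fb :: "real \<Rightarrow> real" where
  "Fb b = (\<integral>t. indicator {..<b} t \<partial>D)"

definition I1 :: "nat \<Rightarrow> nat \<Rightarrow> real \<Rightarrow> real \<Rightarrow> real" where
  "I1 k j a b = (\<integral>t. indicator {..<b} t * p j (rho k (mk a b t)) \<partial>D)"

definition Qg :: "nat \<Rightarrow> real \<Rightarrow> real \<Rightarrow> real" where
  "Qg m a b = (\<Sum>k<6. I1 k (iv k m) a b) / (6 * Fb b)"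

lemma ind_lt: "indicator {..<b} t = (if t < b then 1 else (0::real))"
  by (simp add: indicator_def)

lemma mk1_meas: "(\<lambda>t. mk a b t) \<in> measurable D M"
  unfolding mk_def
proof (rule measurable_restrict)
  fix i :: nat assume "i \<in> {..<3}"
  show "(\<lambda>t. if i = 0 then a else if i = 1 then b else t) \<in> measurable D D"
    by (cases "i = 0"; cases "i = 1") auto
qed

lemma fst_borel: "fst \<in> borel_measurable (borel :: (real \<times> real) measure)"
  using measurable_fst[of "borel::real measure" "borel::real measure"] by (simp add: borel_prod)
lemma snd_borel: "snd \<in> borel_measurable (borel :: (real \<times> real) measure)"
  using measurable_snd[of "borel::real measure" "borel::real measure"] by (simp add: borel_prod)

lemma mk2_meas: "(\<lambda>z. mk (fst (fst z)) (snd (fst z)) (snd z)) \<in> measurable (borel \<Otimes>\<^sub>M D) M"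
  unfolding mk_def
proof (rule measurable_restrict)
  fix i :: nat assume "i \<in> {..<3}"
  have [measurable]: "(\<lambda>z::(real \<times> real) \<times> real. fst (fst z)) \<in> measurable (borel \<Otimes>\<^sub>M D) D"
    "(\<lambda>z::(real \<times> real) \<times> real. snd (fst z)) \<in> measurable (borel \<Otimes>\<^sub>M D) D"
    "(\<lambda>z::(real \<times> real) \<times> real. snd z) \<in> measurable (borel \<Otimes>\<^sub>M D) D"
    using measurable_comp[OF measurable_fst fst_borel] measurable_comp[OF measurable_fst snd_borel]
    by (simp_all add: measurable_cong_sets[OF refl sets_val_dist] comp_def)
  show "(\<lambda>z::(real \<times> real) \<times> real. if i = 0 then fst (fst z) else if i = 1 then snd (fst z) else snd z) \<in> measurable (borel \<Otimes>\<^sub>M D) D"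
    by (cases "i = 0"; cases "i = 1") auto
qed

lemma integrand1_meas: "k < 6 \<Longrightarrow> j < 3 \<Longrightarrow> (\<lambda>t. p j (rho k (mk a b t))) \<in> borel_measurable D"
  using measurable_comp[OF measurable_comp[OF mk1_meas rho_meas] p_meas] by (simp add: comp_def)

lemma int1: "k < 6 \<Longrightarrow> j < 3 \<Longrightarrow> integrable D (\<lambda>t. indicator {..<b} t * p j (rho k (mk a b t)))"
proof (rule int_bdd_D[where B=vbar])
  assume k: "k < 6" and j: "j < 3"
  have [measurable]: "(\<lambda>t. p j (rho k (mk a b t))) \<in> borel_measurable D" by (rule integrand1_meas[OF k j])
  show "(\<lambda>t. indicator {..<b} t * p j (rho k (mk a b t))) \<in> borel_measurable D" by measurable
  fix t show "\<bar>indicator {..<b} t * p j (rho k (mk a b t))\<bar> \<le> vbar"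
    using p_abs[OF j, of "rho k (mk a b t)"] vbar_nn by (auto simp: indicator_def)
qed

lemma int_ind: "integrable D (\<lambda>t. indicator {..<b} t :: real)"
  by (rule int_bdd_D[where B=1]) (auto simp: indicator_def)

lemma Fb_nn: "0 \<le> Fb b"
  unfolding Fb_def by (rule Bochner_Integration.integral_nonneg) auto

lemma I1_nn: "k < 6 \<Longrightarrow> j < 3 \<Longrightarrow> 0 \<le> I1 k j a b"
  unfolding I1_def by (rule Bochner_Integration.integral_nonneg) (auto intro!: p_nn mult_nonneg_nonneg)

lemma I1_le:
  assumes k: "k < 6" and j: "j < 3" and c: "\<And>t. p j (rho k (mk a b t)) \<le> c"
  shows "I1 k j a b \<le> c * Fb b"
proof -
  have "I1 k j a b \<le> (\<integral>t. c * indicator {..<b} t \<partial>D)"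
    unfolding I1_def
    by (rule integral_mono[OF int1[OF k j]]) (use int_ind c in \<open>auto simp: indicator_def\<close>)
  also have "\<dots> = c * Fb b" by (simp add: Fb_def)
  finally show ?thesis .
qed

lemma I1_zero: "k < 6 \<Longrightarrow> j < 3 \<Longrightarrow> Fb b = 0 \<Longrightarrow> I1 k j a b = 0"
  using I1_le[of k j a b vbar] I1_nn[of k j a b] p_bd by force

lemma Qg_F: "m < 3 \<Longrightarrow> Qg m a b * Fb b = (\<Sum>k<6. I1 k (iv k m) a b) / 6"
proof (cases "Fb b = 0")
  case True
  assume m: "m < 3"
  have "(\<Sum>k<6. I1 k (iv k m) a b) = 0"
    using True by (intro sum.neutral) (auto intro!: I1_zero iv_lt m)
  then show ?thesis by (simp add: Qg_def True)
qed (simp add: Qg_def)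

lemma Qg_nn: "m < 3 \<Longrightarrow> 0 \<le> Qg m a b"
  unfolding Qg_def by (intro divide_nonneg_nonneg sum_nonneg I1_nn iv_lt) (auto intro: Fb_nn)

lemma Qg_le:
  assumes m: "m < 3" and c0: "0 \<le> c"
    and c: "\<And>k t. k < 6 \<Longrightarrow> p (iv k m) (rho k (mk a b t)) \<le> c"
  shows "Qg m a b \<le> c"
proof (cases "Fb b = 0")
  case True then show ?thesis using c0 by (simp add: Qg_def)
next
  case False
  then have F: "Fb b > 0" using Fb_nn[of b] by simp
  have "(\<Sum>k<6. I1 k (iv k m) a b) \<le> (\<Sum>k<6::nat. c * Fb b)"
    by (rule sum_mono) (auto intro!: I1_le c iv_lt m)
  also have "\<dots> = 6 * c * Fb b" by simp
  finally show ?thesis using F by (simp add: Qg_def divide_le_eq mult.commute mult.left_commute)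
qed

lemma Qg_le_vbar: "m < 3 \<Longrightarrow> Qg m a b \<le> vbar"
  by (rule Qg_le) (auto intro: vbar_nn p_bd iv_lt)

lemma Qg_le_val:
  assumes m: "m < 2" and a: "a \<in> {0..vbar}" and b: "b \<in> {0..vbar}"
  shows "Qg m a b \<le> mk a b 0 m"
proof (rule Qg_le)
  show "m < 3" using m by simp
  show "0 \<le> mk a b 0 m" using m a b by (cases "m = 0") (auto simp: mk_def)
  fix k t :: nat assume k: "k < 6"
  fix t :: real
  show "p (iv k m) (rho k (mk a b t)) \<le> mk a b 0 m"
  proof (cases "rho k (mk a b t) \<in> box vbar")
    case True
    have "p (iv k m) (rho k (mk a b t)) \<le> rho k (mk a b t) (iv k m)"
      using p_le_v[OF iv_lt[OF k] True] m by simp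
    also have "\<dots> = mk a b 0 m" using m k by (simp add: rho_iv mk_def)
    finally show ?thesis .
  next
    case False then show ?thesis using m a b by (cases "m = 0") (auto simp: p_def mk_def)
  qed
qed

end


lemma perm_sum3: fixes g :: "nat \<Rightarrow> nat \<Rightarrow> real" shows "k < 6 \<Longrightarrow> (\<Sum>j<3. g j (pm k j)) = g (iv k 0) 0 + g (iv k 1) 1 + g (iv k 2) (2::nat)"
  by (drule k6) (auto simp: sum3 pm_def iv_def add_ac)

lemma ordv_cases: "ordv y \<noteq> 0 \<Longrightarrow> y 0 > y 1 \<and> y 1 > y 2"
  by (simp add: ordv_def split: if_splits)

lemma RP_rho: "k < 6 \<Longrightarrow> i < 3 \<Longrightarrow> ordv y * rank_pay Q1 Q2 i (rho k y)
   = ordv y * (if pm k i = 0 then Q1 (y 0) (y 1) else if pm k i = 1 then Q2 (y 0) (y 1) else 0)"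
proof (cases "ordv y = 0")
  case False
  assume k: "k < 6" and i: "i < 3"
  from ordv_cases[OF False] have y: "y 0 > y 1" "y 1 > y 2" by auto
  show ?thesis using rank_rho[OF y k i] ostat_rho[OF y k] by (simp add: rank_pay_def)
qed simp

lemma eff_rho: "k < 6 \<Longrightarrow> i < 3 \<Longrightarrow> ordv y * eff_alloc i (rho k y)
   = ordv y * (if pm k i < 2 then 1 else 0)"
proof (cases "ordv y = 0")
  case False
  assume k: "k < 6" and i: "i < 3"
  from ordv_cases[OF False] have y: "y 0 > y 1" "y 1 > y 2" by auto
  show ?thesis using rank_rho[OF y k i] by (simp add: eff_alloc_def)
qed simp

lemma ordv_mk: "ordv (mk a b t) = (if a > b then 1 else 0) * indicator {..<b} t"
  by (simp add: ordv_def mk_def indicator_def)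

context L0 begin

lemma upd2_mk0: "v \<in> space M \<Longrightarrow> v(0 := w, 2 := t) = mk w (v 1) t"
  by (auto simp: space_PiM PiE_iff extensional_def mk_def fun_eq_iff)

lemma upd2_mk1: "v \<in> space M \<Longrightarrow> v(1 := w, 2 := t) = mk (v 0) w t"
  by (auto simp: space_PiM PiE_iff extensional_def mk_def fun_eq_iff)

lemma upd2_mk: "v \<in> space M \<Longrightarrow> v(2 := t) = mk (v 0) (v 1) t"
  by (auto simp: space_PiM PiE_iff extensional_def mk_def fun_eq_iff)

lemma eff_interim_eq:
  assumes j: "j < 3"
  shows "xfun f eff_alloc j u = 2 * ((\<integral>v. ordv (v(0 := u)) \<partial>M) + (\<integral>v. ordv (v(1 := u)) \<partial>M))"
proof -
  have em: "eff_alloc j \<in> borel_measurable M"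
    using eff_meas[of "\<lambda>v. v" M j] comp_meas j by simp
  have "xfun f eff_alloc j u = (\<integral>v. eff_alloc j (v(j := u)) \<partial>M)"
    by (simp add: xfun_def interim_def prof_measure_eq)
  also have "\<dots> = (\<Sum>k<6. \<integral>v. ordv (v(pm k j := u)) * eff_alloc j (rho k (v(pm k j := u))) \<partial>M)"
    by (rule INTERIM[OF j em, where B=1]) (simp add: eff_alloc_def)
  also have "\<dots> = (\<Sum>k<6. \<integral>v. ordv (v(pm k j := u)) * (if pm k j < 2 then 1 else 0) \<partial>M)"
    using j by (intro sum.cong refl Bochner_Integration.integral_cong) (auto simp: eff_rho)
  also have "\<dots> = 2 * ((\<integral>v. ordv (v(0 := u)) \<partial>M) + (\<integral>v. ordv (v(1 := u)) \<partial>M))"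
    by (subst sum6_pm[OF j, where H="\<lambda>m. \<integral>v. ordv (v(m := u)) * (if m < 2 then 1 else 0) \<partial>M"]) simp
  finally show ?thesis .
qed

lemma zfun_eq: "j < 3 \<Longrightarrow> zfun f eff_alloc j w = zfun f eff_alloc 0 w"
proof -
  assume j: "j < 3"
  have "xfun f eff_alloc j = xfun f eff_alloc 0"
    using eff_interim_eq[OF j] eff_interim_eq[of 0] by (simp add: fun_eq_iff)
  then show ?thesis by (simp add: zfun_def)
qed

end

context L1 begin

lemma integrand2_meas: "k < 6 \<Longrightarrow> j < 3 \<Longrightarrow>
  (\<lambda>z::(real \<times> real) \<times> real. indicator {..<snd (fst z)} (snd z) * p j (rho k (mk (fst (fst z)) (snd (fst z)) (snd z))))
     \<in> borel_measurable (borel \<Otimes>\<^sub>M D)"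
proof -
  assume k: "k < 6" and j: "j < 3"
  have [measurable]: "(\<lambda>z::(real \<times> real) \<times> real. p j (rho k (mk (fst (fst z)) (snd (fst z)) (snd z)))) \<in> borel_measurable (borel \<Otimes>\<^sub>M D)"
    using measurable_comp[OF measurable_comp[OF mk2_meas rho_meas[OF k]] p_meas[OF j]] by (simp add: comp_def)
  have [measurable]: "(\<lambda>z::(real \<times> real) \<times> real. snd (fst z)) \<in> borel_measurable (borel \<Otimes>\<^sub>M D)"
    "(\<lambda>z::(real \<times> real) \<times> real. snd z) \<in> borel_measurable (borel \<Otimes>\<^sub>M D)"
    using measurable_comp[OF measurable_fst snd_borel]
    by (simp_all add: measurable_cong_sets[OF refl sets_val_dist] comp_def)
  show ?thesis unfolding ind_lt by measurable
qed

lemma I1_meas: "k < 6 \<Longrightarrow> j < 3 \<Longrightarrow> (\<lambda>z. I1 k j (fst z) (snd z)) \<in> borel_measurable borel"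
  unfolding I1_def
  by (rule Dp.borel_measurable_lebesgue_integral[where f="\<lambda>z t. indicator {..<snd z} t * p j (rho k (mk (fst z) (snd z) t))", simplified])
     (use integrand2_meas in \<open>simp add: case_prod_beta'\<close>)

lemma Fb_meas: "Fb \<in> borel_measurable borel"
proof -
  have [measurable]: "(\<lambda>z::real \<times> real. snd z) \<in> borel_measurable (borel \<Otimes>\<^sub>M D)"
    "(\<lambda>z::real \<times> real. fst z) \<in> borel_measurable (borel \<Otimes>\<^sub>M D)"
    by (simp_all add: measurable_cong_sets[OF refl sets_val_dist])
  have "(\<lambda>b. \<integral>t. indicator {..<b} t \<partial>D :: real) \<in> borel_measurable borel"
    by (rule Dp.borel_measurable_lebesgue_integral) (simp add: case_prod_beta' ind_lt)
  then show ?thesis by (simp add: Fb_def[abs_def])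
qed

lemma Qg_meas: "m < 3 \<Longrightarrow> (\<lambda>z. Qg m (fst z) (snd z)) \<in> borel_measurable borel"
proof -
  assume m: "m < 3"
  have [measurable]: "(\<lambda>z. I1 k (iv k m) (fst z) (snd z)) \<in> borel_measurable borel" if "k < 6" for k
    using I1_meas[OF that iv_lt[OF that m]] .
  have [measurable]: "(\<lambda>z::real\<times>real. Fb (snd z)) \<in> borel_measurable borel"
    using measurable_comp[OF snd_borel Fb_meas] by (simp add: comp_def)
  show ?thesis unfolding Qg_def by measurable
qed

end


context L1 begin

abbreviation "RP \<equiv> rank_pay (Qg 0) (Qg 1)"

lemma RP_meas: "i < 3 \<Longrightarrow> RP i \<in> borel_measurable M"
proof -
  assume i: "i < 3"
  have "(\<lambda>x. RP i ((\<lambda>v. v) x)) \<in> borel_measurable M"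
    by (rule rank_pay_meas) (auto intro: Qg_meas comp_meas i)
  then show ?thesis by simp
qed

lemma RP_bd: "\<bar>RP i v\<bar> \<le> vbar"
  using Qg_nn[of 0] Qg_nn[of 1] Qg_le_vbar[of 0] Qg_le_vbar[of 1] vbar_nn
  by (auto simp: rank_pay_def)

lemma updw_meas: "j < 3 \<Longrightarrow> c < 3 \<Longrightarrow> (\<lambda>v. (v(j := w)) c) \<in> borel_measurable M"
  using comp_meas[of c] by (cases "c = j") auto

lemma ordv_upd_meas: "j < 3 \<Longrightarrow> (\<lambda>v. ordv (v(j := w))) \<in> borel_measurable M"
  by (rule ordv_meas) (rule updw_meas)

lemma ordv_abs: "\<bar>ordv y * x\<bar> \<le> \<bar>x\<bar>"
  using ordv_01[of y] by auto

lemma Fb_le1: "Fb b \<le> 1"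
proof -
  have "Fb b \<le> (\<integral>t. 1 \<partial>D)" unfolding Fb_def
    by (rule integral_mono) (auto intro: int_ind simp: indicator_def)
  then show ?thesis using Dp.prob_space by simp
qed

lemma I1_le_vbar: "k < 6 \<Longrightarrow> j < 3 \<Longrightarrow> I1 k j a b \<le> vbar"
proof -
  assume k: "k < 6" and j: "j < 3"
  have "I1 k j a b \<le> vbar * Fb b" by (rule I1_le[OF k j p_bd[OF j]])
  also have "\<dots> \<le> vbar * 1" by (rule mult_left_mono[OF Fb_le1 vbar_nn])
  finally show ?thesis by simp
qed

lemma S_eq:
  assumes k: "k < 6" and m: "m < 2"
  shows "(\<integral>v. ordv (v(m := w)) * p (iv k m) (rho k (v(m := w))) \<partial>M)
       = (\<integral>v. (if (v(m := w)) 0 > (v(m := w)) 1 then 1 else 0) * I1 k (iv k m) ((v(m := w)) 0) ((v(m := w)) 1) \<partial>M)"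
proof -
  have j: "iv k m < 3" using iv_lt[OF k] m by simp
  have mm: "(\<lambda>v. ordv (v(m := w)) * p (iv k m) (rho k (v(m := w)))) \<in> borel_measurable M"
    using m by (intro borel_measurable_times ordv_upd_meas measurable_comp[OF measurable_comp[OF upd_meas rho_meas[OF k]] p_meas[OF j], unfolded comp_def]) auto
  have "(\<integral>v. ordv (v(m := w)) * p (iv k m) (rho k (v(m := w))) \<partial>M)
      = (\<integral>v. \<integral>t. ordv ((v(2 := t))(m := w)) * p (iv k m) (rho k ((v(2 := t))(m := w))) \<partial>D \<partial>M)"
    by (rule L2[OF _ mm, where B=vbar]; auto intro: order_trans[OF ordv_abs p_abs[OF j]])
  also have "\<dots> = (\<integral>v. (if (v(m := w)) 0 > (v(m := w)) 1 then 1 else 0) * I1 k (iv k m) ((v(m := w)) 0) ((v(m := w)) 1) \<partial>M)"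
  proof (rule Bochner_Integration.integral_cong[OF refl])
    fix v assume v: "v \<in> space M"
    have e: "(v(2 := t))(m := w) = mk ((v(m := w)) 0) ((v(m := w)) 1) t" for t
    proof (cases "m = 0")
      case True then show ?thesis using upd2_mk0[OF v, of w t] by (simp add: fun_upd_twist)
    next
      case False then have "m = 1" using m by simp
      then show ?thesis using upd2_mk1[OF v, of w t] by (simp add: fun_upd_twist)
    qed
    show "(\<integral>t. ordv ((v(2 := t))(m := w)) * p (iv k m) (rho k ((v(2 := t))(m := w))) \<partial>D)
      = (if (v(m := w)) 0 > (v(m := w)) 1 then 1 else 0) * I1 k (iv k m) ((v(m := w)) 0) ((v(m := w)) 1)"
      unfolding e ordv_mk I1_def by (simp add: mult.assoc)
  qed
  finally show ?thesis .
qed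

lemma T_eq:
  assumes m: "m < 2"
  shows "(\<integral>v. ordv (v(m := w)) * Qg m ((v(m := w)) 0) ((v(m := w)) 1) \<partial>M)
       = (\<Sum>k<6. \<integral>v. (if (v(m := w)) 0 > (v(m := w)) 1 then 1 else 0) * I1 k (iv k m) ((v(m := w)) 0) ((v(m := w)) 1) \<partial>M) / 6"
proof -
  have m3: "m < 3" using m by simp
  have a[measurable]: "(\<lambda>v. (v(m := w)) 0) \<in> borel_measurable M" "(\<lambda>v. (v(m := w)) 1) \<in> borel_measurable M"
    using updw_meas[of m 0 w] updw_meas[of m 1 w] m by auto
  have qm: "(\<lambda>v. Qg m ((v(m := w)) 0) ((v(m := w)) 1)) \<in> borel_measurable M"
    by (rule pair_comp_meas[OF Qg_meas[OF m3] a])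
  have Im: "(\<lambda>v. I1 k (iv k m) ((v(m := w)) 0) ((v(m := w)) 1)) \<in> borel_measurable M" if k: "k < 6" for k
    by (rule pair_comp_meas[OF I1_meas[OF k iv_lt[OF k m3]] a])
  have mm: "(\<lambda>v. ordv (v(m := w)) * Qg m ((v(m := w)) 0) ((v(m := w)) 1)) \<in> borel_measurable M"
    using m by (intro borel_measurable_times ordv_upd_meas qm) auto
  have Qabs: "\<bar>Qg m a b\<bar> \<le> vbar" for a b using Qg_nn[OF m3] Qg_le_vbar[OF m3] by (simp add: abs_le_iff)
  have "(\<integral>v. ordv (v(m := w)) * Qg m ((v(m := w)) 0) ((v(m := w)) 1) \<partial>M)
      = (\<integral>v. \<integral>t. ordv ((v(2 := t))(m := w)) * Qg m (((v(2 := t))(m := w)) 0) (((v(2 := t))(m := w)) 1) \<partial>D \<partial>M)"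
    by (rule L2[OF _ mm, where B=vbar]) (simp_all add: order_trans[OF ordv_abs Qabs])
  also have "\<dots> = (\<integral>v. (\<Sum>k<6. (if (v(m := w)) 0 > (v(m := w)) 1 then 1 else 0) * I1 k (iv k m) ((v(m := w)) 0) ((v(m := w)) 1)) / 6 \<partial>M)"
  proof (rule Bochner_Integration.integral_cong[OF refl])
    fix v assume v: "v \<in> space M"
    let ?a = "(v(m := w)) 0" and ?b = "(v(m := w)) 1"
    have e: "(v(2 := t))(m := w) = mk ?a ?b t" for t
    proof (cases "m = 0")
      case True then show ?thesis using upd2_mk0[OF v, of w t] by (simp add: fun_upd_twist)
    next
      case False then have "m = 1" using m by simp
      then show ?thesis using upd2_mk1[OF v, of w t] by (simp add: fun_upd_twist)
    qed
    have "(\<integral>t. ordv ((v(2 := t))(m := w)) * Qg m (((v(2 := t))(m := w)) 0) (((v(2 := t))(m := w)) 1) \<partial>D)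
        = (\<integral>t. ((if ?a > ?b then 1 else 0) * Qg m ?a ?b) * indicator {..<?b} t \<partial>D)"
      unfolding e ordv_mk mk_at by (simp add: mult_ac)
    also have "\<dots> = (if ?a > ?b then 1 else 0) * (Qg m ?a ?b * Fb ?b)"
      by (simp add: Fb_def)
    also have "\<dots> = (\<Sum>k<6. (if ?a > ?b then 1 else 0) * I1 k (iv k m) ?a ?b) / 6"
      by (simp add: Qg_F[OF m3] sum_distrib_left)
    finally show "(\<integral>t. ordv ((v(2 := t))(m := w)) * Qg m (((v(2 := t))(m := w)) 0) (((v(2 := t))(m := w)) 1) \<partial>D)
        = (\<Sum>k<6. (if ?a > ?b then 1 else 0) * I1 k (iv k m) ?a ?b) / 6" .
  qed
  also have "\<dots> = (\<Sum>k<6. \<integral>v. (if (v(m := w)) 0 > (v(m := w)) 1 then 1 else 0) * I1 k (iv k m) ((v(m := w)) 0) ((v(m := w)) 1) \<partial>M) / 6"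
  proof -
    have "(\<integral>v. (\<Sum>k<6. (if (v(m := w)) 0 > (v(m := w)) 1 then 1 else 0) * I1 k (iv k m) ((v(m := w)) 0) ((v(m := w)) 1)) \<partial>M)
        = (\<Sum>k<6. \<integral>v. (if (v(m := w)) 0 > (v(m := w)) 1 then 1 else 0) * I1 k (iv k m) ((v(m := w)) 0) ((v(m := w)) 1) \<partial>M)"
    proof (rule Bochner_Integration.integral_sum)
      fix k :: nat assume "k \<in> {..<6}" then have k: "k < 6" by simp
      have [measurable]: "(\<lambda>v. I1 k (iv k m) ((v(m := w)) 0) ((v(m := w)) 1)) \<in> borel_measurable M" by (rule Im[OF k])
      show "integrable M (\<lambda>v. (if (v(m := w)) 0 > (v(m := w)) 1 then 1 else 0) * I1 k (iv k m) ((v(m := w)) 0) ((v(m := w)) 1))"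
      proof (rule int_bdd[where B=vbar])
        show "(\<lambda>v. (if (v(m := w)) 0 > (v(m := w)) 1 then 1 else 0) * I1 k (iv k m) ((v(m := w)) 0) ((v(m := w)) 1)) \<in> borel_measurable M"
          by measurable
        fix v
        have "0 \<le> I1 k (iv k m) ((v(m := w)) 0) ((v(m := w)) 1)" by (rule I1_nn[OF k iv_lt[OF k m3]])
        moreover have "I1 k (iv k m) ((v(m := w)) 0) ((v(m := w)) 1) \<le> vbar"
          by (rule I1_le_vbar[OF k iv_lt[OF k m3]])
        ultimately show "\<bar>(if (v(m := w)) 0 > (v(m := w)) 1 then 1 else 0) * I1 k (iv k m) ((v(m := w)) 0) ((v(m := w)) 1)\<bar> \<le> vbar"
          by auto
      qed
    qed
    then show ?thesis by simp
  qed
  finally show ?thesis .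
qed

end


context L1 begin

lemma p_third: "k < 6 \<Longrightarrow> j < 3 \<Longrightarrow> pm k j = 2 \<Longrightarrow> ordv y * p j (rho k y) = 0"
proof (cases "ordv y = 0")
  case False
  assume k: "k < 6" and j: "j < 3" and m: "pm k j = 2"
  from ordv_cases[OF False] have y: "y 0 > y 1" "y 1 > y 2" by auto
  have "p j (rho k y) = 0" using rank_rho[OF y k j] m by (intro p_zero[OF j]) simp
  then show ?thesis by simp
qed simp

definition Aw :: "real \<Rightarrow> nat \<Rightarrow> nat \<Rightarrow> real" where
  "Aw w m k = (\<integral>v. (if (v(m := w)) 0 > (v(m := w)) 1 then 1 else 0) * I1 k (iv k m) ((v(m := w)) 0) ((v(m := w)) 1) \<partial>M)"

lemma RP_interim1:
  assumes i: "i < 3"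
  shows "(\<integral>v. RP i (v(i := w)) \<partial>M) = 2 * ((\<Sum>k<6. Aw w 0 k) / 6 + (\<Sum>k<6. Aw w 1 k) / 6)"
proof -
  define G where "G m (y :: nat \<Rightarrow> real) = (if m = 0 then Qg 0 (y 0) (y 1) else if m = (1::nat) then Qg 1 (y 0) (y 1) else 0)" for m y
  have "(\<integral>v. RP i (v(i := w)) \<partial>M) = (\<Sum>k<6. \<integral>v. ordv (v(pm k i := w)) * RP i (rho k (v(pm k i := w))) \<partial>M)"
    by (rule INTERIM[OF i RP_meas[OF i], where B=vbar]) (rule RP_bd)
  also have "\<dots> = (\<Sum>k<6. \<integral>v. ordv (v(pm k i := w)) * G (pm k i) (v(pm k i := w)) \<partial>M)"
    using i by (intro sum.cong refl Bochner_Integration.integral_cong) (auto simp: RP_rho G_def)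
  also have "\<dots> = 2 * ((\<integral>v. ordv (v(0 := w)) * G 0 (v(0 := w)) \<partial>M) + (\<integral>v. ordv (v(1 := w)) * G 1 (v(1 := w)) \<partial>M)
       + (\<integral>v. ordv (v(2 := w)) * G 2 (v(2 := w)) \<partial>M))"
    by (rule sum6_pm[OF i, where H="\<lambda>m. \<integral>v. ordv (v(m := w)) * G m (v(m := w)) \<partial>M"])
  also have "(\<integral>v. ordv (v(2 := w)) * G 2 (v(2 := w)) \<partial>M) = 0" by (simp add: G_def)
  also have "(\<integral>v. ordv (v(0 := w)) * G 0 (v(0 := w)) \<partial>M) = (\<Sum>k<6. Aw w 0 k) / 6"
    using T_eq[of 0 w] by (simp add: G_def Aw_def)
  also have "(\<integral>v. ordv (v(1 := w)) * G 1 (v(1 := w)) \<partial>M) = (\<Sum>k<6. Aw w 1 k) / 6"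
    using T_eq[of 1 w] by (simp add: G_def Aw_def)
  finally show ?thesis by (simp add: fun_upd_def)
qed

lemma p_interim_sum:
  assumes w: "w \<in> {0..vbar}"
  shows "(\<Sum>j<3. zfun f eff_alloc j w) = (\<Sum>k<6. Aw w 0 k) + (\<Sum>k<6. Aw w 1 k)"
proof -
  define F where "F k j m = (\<integral>v. ordv (v(m := w)) * p j (rho k (v(m := w))) \<partial>M)" for k j m
  have "(\<Sum>j<3. zfun f eff_alloc j w) = (\<Sum>j<3. \<integral>v. p j (v(j := w)) \<partial>M)"
    using w by (intro sum.cong refl p_interim[symmetric]) auto
  also have "\<dots> = (\<Sum>j<3. \<Sum>k<6. F k j (pm k j))"
  proof (rule sum.cong[OF refl])
    fix j :: nat assume "j \<in> {..<3}" then have j: "j < 3" by simp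
    show "(\<integral>v. p j (v(j := w)) \<partial>M) = (\<Sum>k<6. F k j (pm k j))"
      unfolding F_def by (rule INTERIM[OF j p_meas[OF j], where B=vbar]) (rule p_abs[OF j])
  qed
  also have "\<dots> = (\<Sum>k<6. \<Sum>j<3. F k j (pm k j))" by (rule sum.swap)
  also have "\<dots> = (\<Sum>k<6. Aw w 0 k + Aw w 1 k)"
  proof (rule sum.cong[OF refl])
    fix k :: nat assume "k \<in> {..<6}" then have k: "k < 6" by simp
    have "(\<Sum>j<3. F k j (pm k j)) = F k (iv k 0) 0 + F k (iv k 1) 1 + F k (iv k 2) 2"
      by (rule perm_sum3[OF k, where g="F k"])
    also have "F k (iv k 2) 2 = 0"
      unfolding F_def using k iv_lt[OF k, of 2] pm_iv[OF k, of 2] by (simp add: p_third)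
    also have "F k (iv k 0) 0 = Aw w 0 k" unfolding F_def Aw_def by (rule S_eq[OF k]) simp
    also have "F k (iv k 1) 1 = Aw w 1 k" unfolding F_def Aw_def by (rule S_eq[OF k]) simp
    finally show "(\<Sum>j<3. F k j (pm k j)) = Aw w 0 k + Aw w 1 k" by simp
  qed
  also have "\<dots> = (\<Sum>k<6. Aw w 0 k) + (\<Sum>k<6. Aw w 1 k)" by (rule sum.distrib)
  finally show ?thesis .
qed

lemma RP_interim:
  assumes i: "i < 3" and w: "w \<in> {0..vbar}"
  shows "interim f RP i w = zfun f eff_alloc i w"
proof -
  have "interim f RP i w = (\<integral>v. RP i (v(i := w)) \<partial>M)" by (simp add: interim_def prof_measure_eq)
  also have "\<dots> = ((\<Sum>k<6. Aw w 0 k) + (\<Sum>k<6. Aw w 1 k)) / 3" by (subst RP_interim1[OF i]) simp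
  also have "\<dots> = (\<Sum>j<3. zfun f eff_alloc j w) / 3" unfolding p_interim_sum[OF w] ..
  also have "(\<Sum>j<3. zfun f eff_alloc j w) = (\<Sum>j<3::nat. zfun f eff_alloc 0 w)"
    by (intro sum.cong refl zfun_eq) auto
  also have "\<dots> / 3 = zfun f eff_alloc i w" using zfun_eq[OF i, of w] by simp
  finally show ?thesis .
qed

end


lemma subgrad: fixes g :: "real \<Rightarrow> real" assumes "convex_on UNIV g"
  shows "\<exists>c. \<forall>y. g y \<ge> g x + c * (y - x)"
  using convex_le_Inf_differential[OF assms, of x] by auto

lemma sum3_iv: fixes h :: "nat \<Rightarrow> real" shows "k < 6 \<Longrightarrow> (\<Sum>i<3. h i) = h (iv k 0) + h (iv k 1) + h (iv k 2)"
  by (drule k6) (auto simp: sum3 iv_def add_ac)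

lemma sum3_pm: fixes h :: "nat \<Rightarrow> real" shows "k < 6 \<Longrightarrow> (\<Sum>i<3. h (pm k i)) = h 0 + h 1 + h 2"
  by (drule k6) (auto simp: sum3 pm_def add_ac)

context L1 begin

definition rp :: "(nat \<Rightarrow> real) \<Rightarrow> real" where "rp v = (\<Sum>i<3. p i v)"
definition rR :: "(nat \<Rightarrow> real) \<Rightarrow> real" where "rR v = (\<Sum>i<3. RP i v)"
definition S2 :: "real \<Rightarrow> real \<Rightarrow> real" where "S2 a b = Qg 0 a b + Qg 1 a b"

lemma rp_meas: "rp \<in> borel_measurable M"
  unfolding rp_def[abs_def] by (intro borel_measurable_sum p_meas) auto

lemma rR_meas: "rR \<in> borel_measurable M"
  unfolding rR_def[abs_def] by (intro borel_measurable_sum RP_meas) auto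

lemma rp_range: "rp v \<in> {0..3 * vbar}"
proof -
  have "rp v \<le> (\<Sum>i<3::nat. vbar)" unfolding rp_def by (rule sum_mono) (auto intro: p_bd)
  moreover have "0 \<le> rp v" unfolding rp_def by (rule sum_nonneg) (auto intro: p_nn)
  ultimately show ?thesis by simp
qed

lemma rR_range: "rR v \<in> {0..3 * vbar}"
proof -
  have "\<bar>RP i v\<bar> \<le> vbar" for i by (rule RP_bd)
  moreover have "0 \<le> RP i v" for i
    using Qg_nn[of 0] Qg_nn[of 1] by (auto simp: rank_pay_def)
  ultimately have "rR v \<le> (\<Sum>i<3::nat. vbar)" "0 \<le> rR v" unfolding rR_def
    by (intro sum_mono sum_nonneg; simp add: abs_le_iff)+
  then show ?thesis by simp
qed

lemma rR_rho: "k < 6 \<Longrightarrow> ordv y * g (rR (rho k y)) = ordv y * g (S2 (y 0) (y 1))"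
proof (cases "ordv y = 0")
  case False
  assume k: "k < 6"
  then have o: "ordv y = 1" using False ordv_01[of y] by simp
  have "RP i (rho k y) = (if pm k i = 0 then Qg 0 (y 0) (y 1) else if pm k i = 1 then Qg 1 (y 0) (y 1) else 0)"
    if "i < 3" for i using RP_rho[OF k that, of y "Qg 0" "Qg 1"] o by simp
  then have "rR (rho k y) = (\<Sum>i<3. (\<lambda>m. if m = 0 then Qg 0 (y 0) (y 1) else if m = 1 then Qg 1 (y 0) (y 1) else 0) (pm k i))"
    unfolding rR_def by (intro sum.cong) auto
  also have "\<dots> = S2 (y 0) (y 1)"
    using sum3_pm[OF k, of "\<lambda>m. if m = 0 then Qg 0 (y 0) (y 1) else if m = 1 then Qg 1 (y 0) (y 1) else 0"]
    by (simp add: S2_def)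
  finally show ?thesis by simp
qed simp

lemma rp_rho_mk: "k < 6 \<Longrightarrow> a > b \<Longrightarrow> indicator {..<b} t * rp (rho k (mk a b t))
   = indicator {..<b} t * p (iv k 0) (rho k (mk a b t)) + indicator {..<b} t * p (iv k 1) (rho k (mk a b t))"
proof (cases "t < b")
  case True
  assume k: "k < 6" and ab: "a > b"
  have o: "ordv (mk a b t) = 1" using True ab by (simp add: ordv_mk)
  have "p (iv k 2) (rho k (mk a b t)) = 0"
    using p_third[OF k iv_lt[OF k, of 2], of "mk a b t"] o by (simp add: pm_iv[OF k])
  then show ?thesis unfolding rp_def sum3_iv[OF k] by (simp add: algebra_simps)
qed simp


lemma X_meas: "k < 6 \<Longrightarrow> (\<lambda>t. rp (rho k (mk a b t))) \<in> borel_measurable D"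
  using measurable_comp[OF measurable_comp[OF mk1_meas rho_meas] rp_meas] by (simp add: comp_def)

lemma CORE:
  fixes g :: "real \<Rightarrow> real" and Bg :: real
  assumes g: "convex_on UNIV g" and gm: "g \<in> borel_measurable borel"
    and gb: "\<And>x. x \<in> {0..3 * vbar} \<Longrightarrow> \<bar>g x\<bar> \<le> Bg" and ab: "a > b"
  shows "6 * (g (S2 a b) * Fb b) \<le> (\<Sum>k<6. \<integral>t. indicator {..<b} t * g (rp (rho k (mk a b t))) \<partial>D)"
proof -
  let ?S = "S2 a b"
  have Bg0: "0 \<le> Bg" using gb[of 0] vbar_nn by force
  obtain c where c: "\<And>y. g y \<ge> g ?S + c * (y - ?S)" using subgrad[OF g, of ?S] by blast
  have Jk: "(g ?S - c * ?S) * Fb b + c * (I1 k (iv k 0) a b + I1 k (iv k 1) a b)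
      \<le> (\<integral>t. indicator {..<b} t * g (rp (rho k (mk a b t))) \<partial>D)" if k: "k < 6" for k
  proof -
    have [measurable]: "(\<lambda>t. rp (rho k (mk a b t))) \<in> borel_measurable D" by (rule X_meas[OF k])
    have gX[measurable]: "(\<lambda>t. g (rp (rho k (mk a b t)))) \<in> borel_measurable D"
      using measurable_comp[OF X_meas[OF k] gm] by (simp add: comp_def)
    have iX: "integrable D (\<lambda>t. indicator {..<b} t * rp (rho k (mk a b t)))"
      by (rule int_bdd_D[where B="3 * vbar"]) (use rp_range vbar_nn in \<open>auto simp: indicator_def\<close>)
    have igX: "integrable D (\<lambda>t. indicator {..<b} t * g (rp (rho k (mk a b t))))"
      by (rule int_bdd_D[where B=Bg]) (use rp_range gb Bg0 in \<open>auto simp: indicator_def\<close>)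
    have i01: "k < 6 \<Longrightarrow> iv k 0 < 3" "k < 6 \<Longrightarrow> iv k 1 < 3" by (simp_all add: iv_lt)
    have eX: "(\<integral>t. indicator {..<b} t * rp (rho k (mk a b t)) \<partial>D) = I1 k (iv k 0) a b + I1 k (iv k 1) a b"
    proof -
      have "(\<integral>t. indicator {..<b} t * rp (rho k (mk a b t)) \<partial>D)
          = (\<integral>t. indicator {..<b} t * p (iv k 0) (rho k (mk a b t)) + indicator {..<b} t * p (iv k 1) (rho k (mk a b t)) \<partial>D)"
        by (rule Bochner_Integration.integral_cong[OF refl]) (rule rp_rho_mk[OF k ab])
      also have "\<dots> = I1 k (iv k 0) a b + I1 k (iv k 1) a b"
        unfolding I1_def by (rule Bochner_Integration.integral_add[OF int1[OF k i01(1)[OF k]] int1[OF k i01(2)[OF k]]])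
      finally show ?thesis .
    qed
    have "(\<integral>t. (g ?S - c * ?S) * indicator {..<b} t + c * (indicator {..<b} t * rp (rho k (mk a b t))) \<partial>D)
        = (g ?S - c * ?S) * Fb b + c * (I1 k (iv k 0) a b + I1 k (iv k 1) a b)"
      using int_ind iX by (simp add: Fb_def eX)
    moreover have "(\<integral>t. (g ?S - c * ?S) * indicator {..<b} t + c * (indicator {..<b} t * rp (rho k (mk a b t))) \<partial>D)
        \<le> (\<integral>t. indicator {..<b} t * g (rp (rho k (mk a b t))) \<partial>D)"
    proof (rule integral_mono[OF _ igX])
      show "integrable D (\<lambda>t. (g ?S - c * ?S) * indicator {..<b} t + c * (indicator {..<b} t * rp (rho k (mk a b t))))"
        using int_ind iX by simp
      fix t
      show "(g ?S - c * ?S) * indicator {..<b} t + c * (indicator {..<b} t * rp (rho k (mk a b t)))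
          \<le> indicator {..<b} t * g (rp (rho k (mk a b t)))"
        using c[of "rp (rho k (mk a b t))"] by (auto simp: indicator_def algebra_simps)
    qed
    ultimately show ?thesis by simp
  qed
  have h1: "(\<Sum>k<6::nat. (g ?S - c * ?S) * Fb b + c * (I1 k (iv k 0) a b + I1 k (iv k 1) a b))
      \<le> (\<Sum>k<6. \<integral>t. indicator {..<b} t * g (rp (rho k (mk a b t))) \<partial>D)"
    by (rule sum_mono) (rule Jk, simp)
  have h2: "(\<Sum>k<6::nat. (g ?S - c * ?S) * Fb b + c * (I1 k (iv k 0) a b + I1 k (iv k 1) a b))
      = 6 * (g ?S - c * ?S) * Fb b + c * ((\<Sum>k<6. I1 k (iv k 0) a b) + (\<Sum>k<6. I1 k (iv k 1) a b))"
    by (simp only: sum.distrib sum_distrib_left[symmetric]) simp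
  have h3: "(\<Sum>k<6. I1 k (iv k 0) a b) + (\<Sum>k<6. I1 k (iv k 1) a b) = 6 * (?S * Fb b)"
    using Qg_F[of 0 a b] Qg_F[of 1 a b] by (simp add: S2_def algebra_simps)
  have "(\<Sum>k<6::nat. (g ?S - c * ?S) * Fb b + c * (I1 k (iv k 0) a b + I1 k (iv k 1) a b)) = 6 * (g ?S * Fb b)"
    by (simp only: h2 h3) (simp add: algebra_simps)
  with h1 show ?thesis by simp
qed

end

context L0 begin

lemma L2_int:
  fixes \<Psi> :: "(nat \<Rightarrow> real) \<Rightarrow> real" and B :: real
  assumes j: "j < 3" and m: "\<Psi> \<in> borel_measurable M" and b: "\<And>v. v \<in> space M \<Longrightarrow> \<bar>\<Psi> v\<bar> \<le> B"
  shows "integrable M (\<lambda>v. \<integral>t. \<Psi> (v(j := t)) \<partial>D)"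
proof -
  have Tm: "(\<lambda>(v, t). v(j := t)) \<in> measurable (M \<Otimes>\<^sub>M D) M" by (rule T_meas[OF j])
  have "integrable (M \<Otimes>\<^sub>M D) (\<lambda>z. \<Psi> ((\<lambda>(v, t). v(j := t)) z))"
  proof (rule finite_measure.integrable_const_bound[where B=B])
    show "finite_measure (M \<Otimes>\<^sub>M D)" by (rule prob_space.finite_measure[OF PD_prob])
    show "AE z in M \<Otimes>\<^sub>M D. norm (\<Psi> ((\<lambda>(v, t). v(j := t)) z)) \<le> B"
      using measurable_space[OF Tm] b by (intro AE_I2) auto
    show "(\<lambda>z. \<Psi> ((\<lambda>(v, t). v(j := t)) z)) \<in> borel_measurable (M \<Otimes>\<^sub>M D)"
      using measurable_comp[OF Tm m] by (simp add: comp_def)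
  qed
  from MD.integrable_fst'[OF this] show ?thesis by simp
qed

end


context L1 begin

lemma S2_meas: "(\<lambda>z. S2 (fst z) (snd z)) \<in> borel_measurable borel"
  unfolding S2_def using Qg_meas[of 0] Qg_meas[of 1] by (intro borel_measurable_add) auto

lemma S2_range: "S2 a b \<in> {0..3 * vbar}"
  using Qg_nn[of 0 a b] Qg_nn[of 1 a b] Qg_le_vbar[of 0 a b] Qg_le_vbar[of 1 a b] vbar_nn
  by (simp add: S2_def)

lemma conv_main:
  fixes g :: "real \<Rightarrow> real"
  assumes g: "convex_on UNIV g"
  shows "(\<integral>v. g (rR v) \<partial>M) \<le> (\<integral>v. g (rp v) \<partial>M)"
proof -
  have gc: "continuous_on UNIV g" by (rule convex_on_continuous[OF open_UNIV g])
  have gm[measurable]: "g \<in> borel_measurable borel" by (rule borel_measurable_continuous_onI[OF gc])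
  obtain Bg where Bg0: "Bg \<ge> 0" and gb: "\<And>x. x \<in> {0..3 * vbar} \<Longrightarrow> norm (g x) \<le> Bg"
    using continuous_on_compact_bound[OF compact_Icc continuous_on_subset[OF gc subset_UNIV]] by blast
  have gb': "\<And>x. x \<in> {0..3 * vbar} \<Longrightarrow> \<bar>g x\<bar> \<le> Bg" using gb by simp
  have grR: "(\<lambda>v. g (rR v)) \<in> borel_measurable M" using measurable_comp[OF rR_meas gm] by (simp add: comp_def)
  have grp: "(\<lambda>v. g (rp v)) \<in> borel_measurable M" using measurable_comp[OF rp_meas gm] by (simp add: comp_def)
  have c01[measurable]: "(\<lambda>v. v 0) \<in> borel_measurable M" "(\<lambda>v. v 1) \<in> borel_measurable M"
    by (simp_all add: comp_meas)
  have om[measurable]: "ordv \<in> borel_measurable M" using ordv_meas[of "\<lambda>v. v" M] comp_meas by simp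
  have gS[measurable]: "(\<lambda>v. g (S2 (v 0) (v 1))) \<in> borel_measurable M"
    using measurable_comp[OF pair_comp_meas[OF S2_meas c01] gm] by (simp add: comp_def)
  define X0 where "X0 v = ordv v * g (S2 (v 0) (v 1))" for v
  have X0m: "X0 \<in> borel_measurable M" unfolding X0_def[abs_def] by measurable
  have X0b: "\<bar>X0 v\<bar> \<le> Bg" for v unfolding X0_def using ordv_01[of v] gb'[OF S2_range] Bg0 by auto
  define Y where "Y v = (\<Sum>k<6. ordv v * g (rp (rho k v)))" for v
  have Ykm: "(\<lambda>v. ordv v * g (rp (rho k v))) \<in> borel_measurable M" if "k < 6" for k
    using om measurable_comp[OF rho_meas[OF that] grp] by (simp add: comp_def)
  have Ykb: "\<bar>ordv v * g (rp (rho k v))\<bar> \<le> Bg" for k v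
    using ordv_01[of v] gb'[OF rp_range] Bg0 by auto
  have Ym: "Y \<in> borel_measurable M" unfolding Y_def[abs_def] by (intro borel_measurable_sum Ykm) auto
  have Yb: "\<bar>Y v\<bar> \<le> 6 * Bg" for v
  proof -
    have "\<bar>Y v\<bar> \<le> (\<Sum>k<6::nat. \<bar>ordv v * g (rp (rho k v))\<bar>)" unfolding Y_def by (rule sum_abs)
    also have "\<dots> \<le> (\<Sum>k<6::nat. Bg)" by (intro sum_mono Ykb)
    finally show ?thesis by simp
  qed
  have "(\<integral>v. g (rR v) \<partial>M) = (\<Sum>k<6. \<integral>v. ordv v * g (rR (rho k v)) \<partial>M)"
    by (rule DECOMP[OF grR, where B=Bg]) (rule gb'[OF rR_range])
  also have "\<dots> = (\<Sum>k<6::nat. \<integral>v. X0 v \<partial>M)"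
    by (intro sum.cong refl Bochner_Integration.integral_cong) (auto simp: rR_rho X0_def)
  also have "\<dots> = 6 * (\<integral>v. X0 v \<partial>M)" by simp
  also have "(\<integral>v. X0 v \<partial>M) = (\<integral>v. \<integral>t. X0 (v(2 := t)) \<partial>D \<partial>M)"
    by (rule L2[OF _ X0m, where B=Bg]) (simp_all add: X0b)
  finally have LHS: "(\<integral>v. g (rR v) \<partial>M) = 6 * (\<integral>v. \<integral>t. X0 (v(2 := t)) \<partial>D \<partial>M)" .
  have int1: "integrable M (\<lambda>v. \<integral>t. X0 (v(2 := t)) \<partial>D)"
    by (rule L2_int[OF _ X0m, where B=Bg]) (simp_all add: X0b)
  have "(\<integral>v. g (rp v) \<partial>M) = (\<Sum>k<6. \<integral>v. ordv v * g (rp (rho k v)) \<partial>M)"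
    by (rule DECOMP[OF grp, where B=Bg]) (rule gb'[OF rp_range])
  also have "\<dots> = (\<integral>v. Y v \<partial>M)" unfolding Y_def
    by (rule Bochner_Integration.integral_sum[symmetric]) (auto intro!: int_bdd[where B=Bg] Ykm Ykb)
  also have "\<dots> = (\<integral>v. \<integral>t. Y (v(2 := t)) \<partial>D \<partial>M)"
    by (rule L2[OF _ Ym, where B="6 * Bg"]) (simp_all add: Yb)
  finally have RHS: "(\<integral>v. g (rp v) \<partial>M) = (\<integral>v. \<integral>t. Y (v(2 := t)) \<partial>D \<partial>M)" .
  have int2: "integrable M (\<lambda>v. \<integral>t. Y (v(2 := t)) \<partial>D)"
    by (rule L2_int[OF _ Ym, where B="6 * Bg"]) (simp_all add: Yb)
  have pw: "6 * (\<integral>t. X0 (v(2 := t)) \<partial>D) \<le> (\<integral>t. Y (v(2 := t)) \<partial>D)" if v: "v \<in> space M" for v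
  proof -
    let ?a = "v 0" and ?b = "v 1"
    have e: "v(2 := t) = mk ?a ?b t" for t by (rule upd2_mk[OF v])
    have X0e: "X0 (v(2 := t)) = ((if ?a > ?b then 1 else 0) * g (S2 ?a ?b)) * indicator {..<?b} t" for t
    proof -
      have "X0 (v(2 := t)) = ordv (v(2 := t)) * g (S2 ?a ?b)" by (simp add: X0_def)
      also have "\<dots> = ((if ?a > ?b then 1 else 0) * indicator {..<?b} t) * g (S2 ?a ?b)"
        by (simp only: e ordv_mk)
      finally show ?thesis by (simp only: mult_ac)
    qed
    have Ye: "Y (v(2 := t)) = (\<Sum>k<6. (if ?a > ?b then 1 else 0) * (indicator {..<?b} t * g (rp (rho k (mk ?a ?b t)))))" for t
      by (simp only: Y_def e ordv_mk mult.assoc)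
    have Xi: "(\<integral>t. X0 (v(2 := t)) \<partial>D) = (if ?a > ?b then 1 else 0) * (g (S2 ?a ?b) * Fb ?b)"
      unfolding X0e Fb_def integral_mult_right_zero by (simp only: mult.assoc)
    have gX: "(\<lambda>t. g (rp (rho k (mk ?a ?b t)))) \<in> borel_measurable D" if "k < 6" for k
      using measurable_comp[OF X_meas[OF that] gm] by (simp add: comp_def)
    have iJ: "integrable D (\<lambda>t. (if ?a > ?b then 1 else 0) * (indicator {..<?b} t * g (rp (rho k (mk ?a ?b t)))))"
      if "k < 6" for k
    proof (rule int_bdd_D[where B=Bg])
      have [measurable]: "(\<lambda>t. g (rp (rho k (mk ?a ?b t)))) \<in> borel_measurable D" by (rule gX[OF that])
      show "(\<lambda>t. (if ?a > ?b then 1 else 0) * (indicator {..<?b} t * g (rp (rho k (mk ?a ?b t))))) \<in> borel_measurable D"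
        by (intro borel_measurable_times borel_measurable_const borel_measurable_indicator gX[OF that]) simp
      fix t show "\<bar>(if ?a > ?b then 1 else 0) * (indicator {..<?b} t * g (rp (rho k (mk ?a ?b t))))\<bar> \<le> Bg"
        using gb'[OF rp_range] Bg0 by (auto simp: indicator_def)
    qed
    have Yi: "(\<integral>t. Y (v(2 := t)) \<partial>D) = (\<Sum>k<6. (if ?a > ?b then 1 else 0) * (\<integral>t. indicator {..<?b} t * g (rp (rho k (mk ?a ?b t))) \<partial>D))"
    proof -
      have "(\<integral>t. Y (v(2 := t)) \<partial>D) = (\<integral>t. (\<Sum>k<6. (if ?a > ?b then 1 else 0) * (indicator {..<?b} t * g (rp (rho k (mk ?a ?b t))))) \<partial>D)"
        by (simp only: Ye)
      also have "\<dots> = (\<Sum>k<6. \<integral>t. (if ?a > ?b then 1 else 0) * (indicator {..<?b} t * g (rp (rho k (mk ?a ?b t)))) \<partial>D)"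
      proof (rule Bochner_Integration.integral_sum)
        fix k :: nat assume "k \<in> {..<6}" then show "integrable D (\<lambda>t. (if ?a > ?b then 1 else 0) * (indicator {..<?b} t * g (rp (rho k (mk ?a ?b t)))))"
          by (intro iJ) simp
      qed
      also have "\<dots> = (\<Sum>k<6. (if ?a > ?b then 1 else 0) * (\<integral>t. indicator {..<?b} t * g (rp (rho k (mk ?a ?b t))) \<partial>D))"
        by (simp only: integral_mult_right_zero)
      finally show ?thesis .
    qed
    show ?thesis
    proof (cases "?a > ?b")
      case True
      have "(\<integral>t. X0 (v(2 := t)) \<partial>D) = g (S2 ?a ?b) * Fb ?b" by (simp only: Xi) (use True in simp)
      moreover have "(\<integral>t. Y (v(2 := t)) \<partial>D) = (\<Sum>k<6. \<integral>t. indicator {..<?b} t * g (rp (rho k (mk ?a ?b t))) \<partial>D)"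
        by (simp only: Yi) (use True in simp)
      ultimately show ?thesis using CORE[OF g gm gb' True] by simp
    next
      case False
      have "(\<integral>t. X0 (v(2 := t)) \<partial>D) = 0" by (simp only: Xi) (use False in simp)
      moreover have "(\<integral>t. Y (v(2 := t)) \<partial>D) = 0" by (simp only: Yi) (use False in simp)
      ultimately show ?thesis by simp
    qed
  qed
  have "6 * (\<integral>v. \<integral>t. X0 (v(2 := t)) \<partial>D \<partial>M) = (\<integral>v. 6 * (\<integral>t. X0 (v(2 := t)) \<partial>D) \<partial>M)" by simp
  also have "\<dots> \<le> (\<integral>v. \<integral>t. Y (v(2 := t)) \<partial>D \<partial>M)"
    by (rule integral_mono[OF integrable_mult_right[OF int1] int2 pw])
  finally show ?thesis unfolding LHS RHS .
qed

end


lemma convex_sq_shift: "convex_on UNIV (\<lambda>x::real. (x - m)\<^sup>2)"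
proof (rule convex_onI)
  fix t x y :: real assume t: "t > 0" "t < 1"
  have e: "(1 - t) * (x - m)\<^sup>2 + t * (y - m)\<^sup>2 - ((1 - t) *\<^sub>R x + t *\<^sub>R y - m)\<^sup>2 = t * (1 - t) * (x - y)\<^sup>2"
    by (simp add: algebra_simps power2_eq_square)
  have "0 \<le> t * (1 - t) * (x - y)\<^sup>2" using t by simp
  then show "((1 - t) *\<^sub>R x + t *\<^sub>R y - m)\<^sup>2 \<le> (1 - t) * (x - m)\<^sup>2 + t * (y - m)\<^sup>2"
    using e by linarith
qed simp

context L1 begin

lemma RP_nn: "0 \<le> RP i v"
  using Qg_nn[of 0] Qg_nn[of 1] by (auto simp: rank_pay_def)

lemma RP_IR: "ex_post_IR vbar eff_alloc RP"
  unfolding ex_post_IR_def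
proof (intro ballI)
  fix i v assume i: "i \<in> bidders" and v: "v \<in> box vbar"
  have i3: "i < 3" using i by (simp add: bidders_def)
  have ob: "ostat v 0 \<in> {0..vbar}" "ostat v 1 \<in> {0..vbar}" using ostat_box[OF v] by auto
  show "0 \<le> v i * eff_alloc i v - RP i v"
  proof (cases "rank v i = 0")
    case True
    have "RP i v = Qg 0 (ostat v 0) (ostat v 1)" using True by (simp add: rank_pay_def)
    also have "\<dots> \<le> mk (ostat v 0) (ostat v 1) 0 0" by (rule Qg_le_val) (use ob in auto)
    also have "\<dots> = v i" using rank_tie[OF i3, of v] True by (simp add: mk_def)
    finally show ?thesis using True by (simp add: eff_alloc_def)
  next
    case False
    show ?thesis
    proof (cases "rank v i = 1")
      case True
      have "RP i v = Qg 1 (ostat v 0) (ostat v 1)" using True by (simp add: rank_pay_def)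
      also have "\<dots> \<le> mk (ostat v 0) (ostat v 1) 0 1" by (rule Qg_le_val) (use ob in auto)
      also have "\<dots> = v i" using rank_tie[OF i3, of v] True by (simp add: mk_def)
      finally show ?thesis using True by (simp add: eff_alloc_def)
    next
      case F2: False
      then show ?thesis using False by (simp add: rank_pay_def eff_alloc_def)
    qed
  qed
qed

lemma conv_final:
  fixes g :: "real \<Rightarrow> real"
  assumes g: "convex_on UNIV g"
  shows "(\<integral>v. g (\<Sum>i\<in>bidders. RP i v) \<partial>prof_measure f) \<le> (\<integral>v. g (\<Sum>i\<in>bidders. \<pi> i v) \<partial>prof_measure f)"
proof -
  have gc: "continuous_on UNIV g" by (rule convex_on_continuous[OF open_UNIV g])
  have gm: "g \<in> borel_measurable borel" by (rule borel_measurable_continuous_onI[OF gc])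
  have l: "(\<integral>v. g (\<Sum>i\<in>bidders. RP i v) \<partial>prof_measure f) = (\<integral>v. g (rR v) \<partial>M)"
    by (simp add: prof_measure_eq bidders_def rR_def)
  have sm: "(\<lambda>v. \<Sum>i<3. \<pi> i v) \<in> borel_measurable M"
    by (intro borel_measurable_sum \<pi>_meas) auto
  have r: "(\<integral>v. g (\<Sum>i\<in>bidders. \<pi> i v) \<partial>prof_measure f) = (\<integral>v. g (rp v) \<partial>M)"
  proof -
    have "(\<integral>v. g (\<Sum>i\<in>bidders. \<pi> i v) \<partial>prof_measure f) = (\<integral>v. g (\<Sum>i<3. \<pi> i v) \<partial>M)"
      by (simp add: prof_measure_eq bidders_def)
    also have "\<dots> = (\<integral>v. g (rp v) \<partial>M)"
    proof (rule integral_cong_AE)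
      show "(\<lambda>v. g (\<Sum>i<3. \<pi> i v)) \<in> borel_measurable M"
        using measurable_comp[OF sm gm] by (simp add: comp_def)
      show "(\<lambda>v. g (rp v)) \<in> borel_measurable M"
        using measurable_comp[OF rp_meas gm] by (simp add: comp_def)
      show "AE v in M. g (\<Sum>i<3. \<pi> i v) = g (rp v)"
        using AE_box by eventually_elim (simp add: rp_def p_def)
    qed
    finally show ?thesis .
  qed
  show ?thesis unfolding l r by (rule conv_main[OF g])
qed

lemma var_final:
  "prob_space.variance (prof_measure f) (\<lambda>v. \<Sum>i\<in>bidders. RP i v)
     \<le> prob_space.variance (prof_measure f) (\<lambda>v. \<Sum>i\<in>bidders. \<pi> i v)"
proof -
  let ?N = "prof_measure f"
  let ?X = "\<lambda>v. \<Sum>i\<in>bidders. RP i v" and ?Y = "\<lambda>v. \<Sum>i\<in>bidders. \<pi> i v"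
  have id: "convex_on UNIV (\<lambda>x::real. x)" by (simp add: convex_on_ident)
  have mid: "convex_on UNIV (\<lambda>x::real. - x)"
    using convex_on_cmul[of 0 UNIV "\<lambda>x::real. x"] convex_on_ident[of "UNIV :: real set"]
    by (simp add: convex_on_def)
  have "(\<integral>v. ?X v \<partial>?N) \<le> (\<integral>v. ?Y v \<partial>?N)" using conv_final[OF id] by simp
  moreover have "(\<integral>v. - ?X v \<partial>?N) \<le> (\<integral>v. - ?Y v \<partial>?N)" using conv_final[OF mid] by simp
  ultimately have eq: "(\<integral>v. ?X v \<partial>?N) = (\<integral>v. ?Y v \<partial>?N)" by simp
  have "(\<integral>v. (?X v - (\<integral>v. ?Y v \<partial>?N))\<^sup>2 \<partial>?N) \<le> (\<integral>v. (?Y v - (\<integral>v. ?Y v \<partial>?N))\<^sup>2 \<partial>?N)"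
    by (rule conv_final[OF convex_sq_shift])
  then show ?thesis
    using eq by simp
qed

end

theorem mainTheorem16:
  fixes f :: "real \<Rightarrow> real" and vbar :: real
    and \<pi> :: "nat \<Rightarrow> (nat \<Rightarrow> real) \<Rightarrow> real"
  assumes vbar_pos: "vbar > 0"
    and f_meas: "f \<in> borel_measurable borel"
    and f_pos: "\<And>x. x \<in> {0..vbar} \<Longrightarrow> f x > 0"
    and f_zero: "\<And>x. x \<notin> {0..vbar} \<Longrightarrow> f x = 0"
    and f_prob: "prob_space (val_dist f)"
    and \<pi>_pay: "payment_rule f vbar \<pi>"
    and \<pi>_impl: "implements f vbar eff_alloc \<pi>"
    and \<pi>_IR: "ex_post_IR vbar eff_alloc \<pi>"
  shows "\<exists>P1 P2 :: real \<Rightarrow> real \<Rightarrow> real.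
     (\<lambda>y. P1 (fst y) (snd y)) \<in> borel_measurable (restrict_space borel (tri vbar)) \<and>
     (\<lambda>y. P2 (fst y) (snd y)) \<in> borel_measurable (restrict_space borel (tri vbar)) \<and>
     (\<forall>i\<in>bidders. \<forall>v\<in>box vbar. rank_pay P1 P2 i v \<ge> 0) \<and>
     ex_post_IR vbar eff_alloc (rank_pay P1 P2) \<and>
     (\<forall>i\<in>bidders. \<forall>w\<in>{0..vbar}.
        interim f (rank_pay P1 P2) i w = zfun f eff_alloc i w) \<and>
     (\<forall>g :: real \<Rightarrow> real. convex_on UNIV g \<longrightarrow>
        (\<integral>v. g (\<Sum>i\<in>bidders. rank_pay P1 P2 i v) \<partial>prof_measure f)
          \<le> (\<integral>v. g (\<Sum>i\<in>bidders. \<pi> i v) \<partial>prof_measure f)) \<and>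
     prob_space.variance (prof_measure f) (\<lambda>v. \<Sum>i\<in>bidders. rank_pay P1 P2 i v)
       \<le> prob_space.variance (prof_measure f) (\<lambda>v. \<Sum>i\<in>bidders. \<pi> i v)"
proof -
  have LL: "L1 f vbar \<pi>"
  proof (intro L1.intro L0.intro L1_axioms.intro)
    show "f \<in> borel_measurable borel" by (rule f_meas)
    show "\<And>x. x \<notin> {0..vbar} \<Longrightarrow> f x = 0" by (rule f_zero)
    show "prob_space (val_dist f)" by (rule f_prob)
    show "payment_rule f vbar \<pi>" by (rule \<pi>_pay)
    show "implements f vbar eff_alloc \<pi>" by (rule \<pi>_impl)
    show "ex_post_IR vbar eff_alloc \<pi>" by (rule \<pi>_IR)
  qed
  interpret L: L1 f vbar \<pi> by (rule LL)
  show ?thesis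
  proof (rule exI[of _ "L.Qg 0"], rule exI[of _ "L.Qg 1"], intro conjI)
    show "(\<lambda>y. L.Qg 0 (fst y) (snd y)) \<in> borel_measurable (restrict_space borel (tri vbar))"
      by (rule measurable_restrict_space1[OF L.Qg_meas]) simp
    show "(\<lambda>y. L.Qg 1 (fst y) (snd y)) \<in> borel_measurable (restrict_space borel (tri vbar))"
      by (rule measurable_restrict_space1[OF L.Qg_meas]) simp
    show "\<forall>i\<in>bidders. \<forall>v\<in>box vbar. rank_pay (L.Qg 0) (L.Qg 1) i v \<ge> 0"
      by (intro ballI L.RP_nn)
    show "ex_post_IR vbar eff_alloc (rank_pay (L.Qg 0) (L.Qg 1))" by (rule L.RP_IR)
    show "\<forall>i\<in>bidders. \<forall>w\<in>{0..vbar}. interim f (rank_pay (L.Qg 0) (L.Qg 1)) i w = zfun f eff_alloc i w"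
    proof (intro ballI)
      fix i w assume i: "i \<in> bidders" and w: "w \<in> {0..vbar}"
      show "interim f (rank_pay (L.Qg 0) (L.Qg 1)) i w = zfun f eff_alloc i w"
        by (rule L.RP_interim[OF _ w]) (use i in \<open>simp add: bidders_def\<close>)
    qed
    show "\<forall>g :: real \<Rightarrow> real. convex_on UNIV g \<longrightarrow>
        (\<integral>v. g (\<Sum>i\<in>bidders. rank_pay (L.Qg 0) (L.Qg 1) i v) \<partial>prof_measure f)
          \<le> (\<integral>v. g (\<Sum>i\<in>bidders. \<pi> i v) \<partial>prof_measure f)"
      by (intro allI impI L.conv_final)
    show "prob_space.variance (prof_measure f) (\<lambda>v. \<Sum>i\<in>bidders. rank_pay (L.Qg 0) (L.Qg 1) i v)
       \<le> prob_space.variance (prof_measure f) (\<lambda>v. \<Sum>i\<in>bidders. \<pi> i v)"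
      by (rule L.var_final)
  qed
qed

end
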